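(* Let $(G,N,\theta)_{\mathcal H}$ be an $\mathcal H$-triple and let $\mathcal P$ be a projective representation of $G_\theta$ associated with $\theta$, with entries in $\mathbb Q^{\mathrm{ab}}$ and factor set $\alpha$. (a) Let $g\in G_\theta$. Then $\mathcal P^g(y)=\mu_g(y)M\mathcal P(y)M^{-1}$ for all $y\in G_\theta$, where $\mu_g(y)=\dfrac{\alpha(g,g^{-1})}{\alpha(g,yg^{-1})\alpha(y,g^{-1})}$ and $M=\mathcal P(g)$. In particular, $\mu_g$ takes values in $\mathbb Q^{\mathrm{ab}}\setminus\{0\}$. (b) Let $(g,\sigma)\in(G\times\mathcal H)_\theta$ and write $g=tx$ with $t\in G_\theta$ and $x\in G$. Then $\theta^{x\sigma}=\theta$, $(G_\theta)^x=G_\theta$, and $\mu_{g\sigma}=\mu_t^{x\sigma}\mu_{x\sigma}$, where $\mu_t^{x\sigma}(y)=\sigma(\mu_t(xyx^{-1}))$ for $y\in G_\theta$.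
   Context: All groups are finite; $p$ is a fixed prime. $\mathbb Q^{\mathrm{ab}}\subseteq\mathbb C$ is generated by all roots of unity, $\mathcal G=\mathrm{Gal}(\mathbb Q^{\mathrm{ab}}/\mathbb Q)$, $\mathcal H\le\mathcal G$ consists of those $\sigma$ for which there is an integer $f$ with $\sigma(\xi)=\xi^{p^f}$ for all roots of unity $\xi$ of order prime to $p$. For $N\trianglelefteq G$, $\theta\in\mathrm{Irr}(N)$, $g\in G$, $\sigma\in\mathcal G$: $\theta^{g\sigma}(n)=\sigma(\theta(gng^{-1}))$; $(G\times\mathcal H)_\theta$ is the stabilizer of $\theta$; $\theta^{\mathcal H}$ the $\mathcal H$-orbit; $G_{\theta^{\mathcal H}}=\{g:\theta^g\in\theta^{\mathcal H}\}$. $(G,N,\theta)_{\mathcal H}$ is an $\mathcal H$-triple if $N\trianglelefteq G$, $\theta\in\mathrm{Irr}(N)$, $G_{\theta^{\mathcal H}}=G$. A projective representation $\mathcal P$ with factor set $\alpha$ satisfies $\mathcal P(x)\mathcal P(y)=\alpha(x,y)\mathcal P(xy)$; $\mathcal P$ on $G_\theta$ is associated with $\theta$ if $\mathcal P_N$ affords $\theta$ and $\mathcal P(ng)=\mathcal P(n)\mathcal P(g)$, $\mathcal P(gn)=\mathcal P(g)\mathcal P(n)$. For $(x,\sigma)\in G\times\mathcal G$ with $\theta^{x\sigma}=\theta$, $\mathcal P^{x\sigma}(y)=\sigma(\mathcal P(xyx^{-1}))$ (entrywise; $\mathcal P^x$ when $\sigma=1$), and $\mu_{x\sigma}:G_\theta\to\mathbb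 C^\times$ is the unique function, constant on $N$-cosets with $\mu_{x\sigma}(1)=1$, such that $\mathcal P^{x\sigma}(y)=\mu_{x\sigma}(y)L^{-1}\mathcal P(y)L$ for all $y$, for some invertible matrix $L$. *)

theory Defs
  imports "HOL-Algebra.Group" "HOL-Algebra.Coset" "Jordan_Normal_Form.Matrix"
    "HOL-Computational_Algebra.Primes"
begin

definition roots_of_unity :: "complex set" where
  "roots_of_unity = {z. \<exists>n::nat. n > 0 \<and> z ^ n = 1}"

definition is_subfield_C :: "complex set \<Rightarrow> bool" where
  "is_subfield_C F \<longleftrightarrow> 0 \<in> F \<and> 1 \<in> F \<and>
     (\<forall>a\<in>F. \<forall>b\<in>F. a + b \<in> F \<and> a - b \<in> F \<and> a * b \<in> F) \<and>
     (\<forall>a\<in>F. a \<noteq> 0 \<longrightarrow> inverse a \<in> F)"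

definition Qab :: "complex set" where
  "Qab = \<Inter> {F. is_subfield_C F \<and> roots_of_unity \<subseteq> F}"

text \<open>Elements of Gal(Q^ab/Q): field automorphisms of Q^ab, represented by
  functions on C whose behaviour outside Q^ab is irrelevant.\<close>
definition GalQab :: "(complex \<Rightarrow> complex) set" where
  "GalQab = {\<sigma>. bij_betw \<sigma> Qab Qab \<and>
     (\<forall>a\<in>Qab. \<forall>b\<in>Qab. \<sigma> (a + b) = \<sigma> a + \<sigma> b \<and> \<sigma> (a * b) = \<sigma> a * \<sigma> b)}"

text \<open>The subgroup H (for the fixed prime p): there is an integer f with
  sigma(xi) = xi^(p^f) for all roots of unity xi of order prime to p. For f < 0,
  xi^(p^f) is the unique root of unity eta of order prime to p with eta^(p^(-f)) = xi;
  since sigma(xi) is such a root of unity, this is expressed as sigma(xi)^(p^(-f)) = xi.\<close>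
definition HGal :: "nat \<Rightarrow> (complex \<Rightarrow> complex) set" where
  "HGal p = {\<sigma>\<in>GalQab. \<exists>f::int. \<forall>\<xi>. (\<exists>m::nat. m > 0 \<and> \<xi> ^ m = 1 \<and> coprime m p) \<longrightarrow>
      (if f \<ge> 0 then \<sigma> \<xi> = \<xi> ^ (p ^ nat f) else (\<sigma> \<xi>) ^ (p ^ nat (- f)) = \<xi>)}"

definition mat_trace :: "'c::comm_ring_1 mat \<Rightarrow> 'c" where
  "mat_trace A = (\<Sum>i<dim_row A. A $$ (i, i))"

definition is_rep :: "('a, 'b) monoid_scheme \<Rightarrow> 'a set \<Rightarrow> nat \<Rightarrow> ('a \<Rightarrow> complex mat) \<Rightarrow> bool" where
  "is_rep G N d \<rho> \<longleftrightarrow> (\<forall>n\<in>N. \<rho> n \<in> carrier_mat d d) \<and> \<rho> \<one>\<^bsub>G\<^esub> = 1\<^sub>m d \<and>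
     (\<forall>n\<in>N. \<forall>m\<in>N. \<rho> (n \<otimes>\<^bsub>G\<^esub> m) = \<rho> n * \<rho> m)"

definition invariant_subspace :: "'a set \<Rightarrow> nat \<Rightarrow> ('a \<Rightarrow> complex mat) \<Rightarrow> complex vec set \<Rightarrow> bool" where
  "invariant_subspace N d \<rho> W \<longleftrightarrow> W \<subseteq> carrier_vec d \<and> 0\<^sub>v d \<in> W \<and>
     (\<forall>v\<in>W. \<forall>w\<in>W. v + w \<in> W) \<and> (\<forall>c. \<forall>v\<in>W. c \<cdot>\<^sub>v v \<in> W) \<and>
     (\<forall>n\<in>N. \<forall>v\<in>W. \<rho> n *\<^sub>v v \<in> W)"

definition irr_rep :: "('a, 'b) monoid_scheme \<Rightarrow> 'a set \<Rightarrow> nat \<Rightarrow> ('a \<Rightarrow> complex mat) \<Rightarrow> bool" where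
  "irr_rep G N d \<rho> \<longleftrightarrow> is_rep G N d \<rho> \<and> d > 0 \<and>
     (\<forall>W. invariant_subspace N d \<rho> W \<longrightarrow> W = {0\<^sub>v d} \<or> W = carrier_vec d)"

definition irr_char :: "('a, 'b) monoid_scheme \<Rightarrow> 'a set \<Rightarrow> ('a \<Rightarrow> complex) \<Rightarrow> bool" where
  "irr_char G N \<theta> \<longleftrightarrow> (\<exists>d \<rho>. irr_rep G N d \<rho> \<and> (\<forall>n\<in>N. \<theta> n = mat_trace (\<rho> n)))"

definition fixes_char :: "('a, 'b) monoid_scheme \<Rightarrow> 'a set \<Rightarrow> ('a \<Rightarrow> complex) \<Rightarrow> 'a \<Rightarrow> (complex \<Rightarrow> complex) \<Rightarrow> bool" where
  "fixes_char G N \<theta> g \<sigma> \<longleftrightarrow> (\<forall>n\<in>N. \<sigma> (\<theta> (g \<otimes>\<^bsub>G\<^esub> n \<otimes>\<^bsub>G\<^esub> inv\<^bsub>G\<^esub> g)) = \<theta> n)"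

definition stab :: "('a, 'b) monoid_scheme \<Rightarrow> 'a set \<Rightarrow> ('a \<Rightarrow> complex) \<Rightarrow> 'a set" where
  "stab G N \<theta> = {g\<in>carrier G. fixes_char G N \<theta> g (\<lambda>z. z)}"

text \<open>(G,N,theta)_H is an H-triple: N normal, theta irreducible, G_{theta^H} = G.\<close>
definition H_triple :: "nat \<Rightarrow> ('a, 'b) monoid_scheme \<Rightarrow> 'a set \<Rightarrow> ('a \<Rightarrow> complex) \<Rightarrow> bool" where
  "H_triple p G N \<theta> \<longleftrightarrow> N \<lhd> G \<and> irr_char G N \<theta> \<and>
     {g\<in>carrier G. \<exists>\<sigma>\<in>HGal p. \<forall>n\<in>N. \<theta> (g \<otimes>\<^bsub>G\<^esub> n \<otimes>\<^bsub>G\<^esub> inv\<^bsub>G\<^esub> g) = \<sigma> (\<theta> n)} = carrier G"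

definition proj_rep :: "('a, 'b) monoid_scheme \<Rightarrow> 'a set \<Rightarrow> nat \<Rightarrow> ('a \<Rightarrow> complex mat) \<Rightarrow> ('a \<Rightarrow> 'a \<Rightarrow> complex) \<Rightarrow> bool" where
  "proj_rep G S d P \<alpha> \<longleftrightarrow> (\<forall>y\<in>S. P y \<in> carrier_mat d d \<and> invertible_mat (P y)) \<and>
     (\<forall>x\<in>S. \<forall>y\<in>S. \<alpha> x y \<noteq> 0 \<and> P x * P y = \<alpha> x y \<cdot>\<^sub>m P (x \<otimes>\<^bsub>G\<^esub> y))"

definition associated :: "('a, 'b) monoid_scheme \<Rightarrow> 'a set \<Rightarrow> ('a \<Rightarrow> complex) \<Rightarrow> nat \<Rightarrow> ('a \<Rightarrow> complex mat) \<Rightarrow> bool" where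
  "associated G N \<theta> d P \<longleftrightarrow> is_rep G N d P \<and> (\<forall>n\<in>N. mat_trace (P n) = \<theta> n) \<and>
     (\<forall>n\<in>N. \<forall>g\<in>stab G N \<theta>. P (n \<otimes>\<^bsub>G\<^esub> g) = P n * P g \<and> P (g \<otimes>\<^bsub>G\<^esub> n) = P g * P n)"

definition conj_proj :: "('a, 'b) monoid_scheme \<Rightarrow> ('a \<Rightarrow> complex mat) \<Rightarrow> 'a \<Rightarrow> (complex \<Rightarrow> complex) \<Rightarrow> 'a \<Rightarrow> complex mat" where
  "conj_proj G P x \<sigma> y = map_mat \<sigma> (P (x \<otimes>\<^bsub>G\<^esub> y \<otimes>\<^bsub>G\<^esub> inv\<^bsub>G\<^esub> x))"

definition mu :: "('a, 'b) monoid_scheme \<Rightarrow> 'a set \<Rightarrow> ('a \<Rightarrow> complex) \<Rightarrow> nat \<Rightarrow> ('a \<Rightarrow> complex mat) \<Rightarrow> 'a \<Rightarrow> (complex \<Rightarrow> complex) \<Rightarrow> 'a \<Rightarrow> complex" where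
  "mu G N \<theta> d P x \<sigma> = (THE \<mu>.
     (\<forall>y. y \<notin> stab G N \<theta> \<longrightarrow> \<mu> y = undefined) \<and>
     (\<forall>y\<in>stab G N \<theta>. \<mu> y \<noteq> 0) \<and>
     (\<forall>y\<in>stab G N \<theta>. \<forall>n\<in>N. \<mu> (n \<otimes>\<^bsub>G\<^esub> y) = \<mu> y) \<and>
     \<mu> \<one>\<^bsub>G\<^esub> = 1 \<and>
     (\<exists>L\<in>carrier_mat d d. \<exists>L'\<in>carrier_mat d d. L * L' = 1\<^sub>m d \<and> L' * L = 1\<^sub>m d \<and>
        (\<forall>y\<in>stab G N \<theta>. conj_proj G P x \<sigma> y = \<mu> y \<cdot>\<^sub>m (L' * P y * L))))"

end

theory Submission
  imports Defs "Jordan_Normal_Form.Spectral_Radius"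
begin

lemma Qab_subfield: "is_subfield_C Qab"
  unfolding is_subfield_C_def Qab_def by auto

lemma Qab_0[simp]: "0 \<in> Qab" and Qab_1[simp]: "1 \<in> Qab"
  using Qab_subfield unfolding is_subfield_C_def by auto

lemma Qab_add[simp]: "a \<in> Qab \<Longrightarrow> b \<in> Qab \<Longrightarrow> a + b \<in> Qab"
  and Qab_diff[simp]: "a \<in> Qab \<Longrightarrow> b \<in> Qab \<Longrightarrow> a - b \<in> Qab"
  and Qab_mult[simp]: "a \<in> Qab \<Longrightarrow> b \<in> Qab \<Longrightarrow> a * b \<in> Qab"
  using Qab_subfield unfolding is_subfield_C_def by auto

lemma Qab_inverse[simp]: "a \<in> Qab \<Longrightarrow> inverse a \<in> Qab"
  using Qab_subfield unfolding is_subfield_C_def by (cases "a = 0") auto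

lemma Qab_divide[simp]: "a \<in> Qab \<Longrightarrow> b \<in> Qab \<Longrightarrow> a / b \<in> Qab"
  by (simp add: divide_inverse)

lemma Qab_sum[simp]: "(\<And>x. x \<in> S \<Longrightarrow> f x \<in> Qab) \<Longrightarrow> sum f S \<in> Qab"
  by (induction S rule: infinite_finite_induct) auto

definition qhom :: "(complex \<Rightarrow> complex) \<Rightarrow> bool" where
  "qhom \<sigma> \<longleftrightarrow> (\<forall>a\<in>Qab. \<sigma> a \<in> Qab) \<and> inj_on \<sigma> Qab \<and>
     (\<forall>a\<in>Qab. \<forall>b\<in>Qab. \<sigma> (a + b) = \<sigma> a + \<sigma> b \<and> \<sigma> (a * b) = \<sigma> a * \<sigma> b)"

lemma qhom_id: "qhom (\<lambda>z. z)"
  unfolding qhom_def by auto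

lemma qhom_Gal: "\<sigma> \<in> GalQab \<Longrightarrow> qhom \<sigma>"
  unfolding GalQab_def qhom_def bij_betw_def by blast

lemma qhom_HGal: "\<sigma> \<in> HGal p \<Longrightarrow> qhom \<sigma>"
  using qhom_Gal unfolding HGal_def by blast

context fixes \<sigma> assumes q: "qhom \<sigma>" begin

lemma qh_Qab: "a \<in> Qab \<Longrightarrow> \<sigma> a \<in> Qab" using q unfolding qhom_def by auto
lemma qh_add: "a \<in> Qab \<Longrightarrow> b \<in> Qab \<Longrightarrow> \<sigma> (a + b) = \<sigma> a + \<sigma> b" using q unfolding qhom_def by auto
lemma qh_mult: "a \<in> Qab \<Longrightarrow> b \<in> Qab \<Longrightarrow> \<sigma> (a * b) = \<sigma> a * \<sigma> b" using q unfolding qhom_def by auto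
lemma qh_inj: "a \<in> Qab \<Longrightarrow> b \<in> Qab \<Longrightarrow> \<sigma> a = \<sigma> b \<Longrightarrow> a = b" using q unfolding qhom_def inj_on_def by auto

lemma qh_0: "\<sigma> 0 = 0"
  using qh_add[OF Qab_0 Qab_0, unfolded add_0_right add_cancel_right_right] .

lemma qh_nz: "a \<in> Qab \<Longrightarrow> a \<noteq> 0 \<Longrightarrow> \<sigma> a \<noteq> 0"
  using qh_inj[of a 0] qh_0 by auto

lemma qh_1: "\<sigma> 1 = 1"
proof -
  have h: "\<sigma> 1 * 1 = \<sigma> 1 * \<sigma> 1" using qh_mult[OF Qab_1 Qab_1, unfolded mult_1_right] by (rule HOL.trans[OF mult_1_right])
  have "\<sigma> 1 \<noteq> 0" using qh_nz[of 1] by simp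
  with h show ?thesis using mult_left_cancel[OF \<open>\<sigma> 1 \<noteq> 0\<close>] by metis
qed

lemma qh_sum: "(\<And>x. x \<in> S \<Longrightarrow> f x \<in> Qab) \<Longrightarrow> \<sigma> (sum f S) = (\<Sum>x\<in>S. \<sigma> (f x))"
  by (induction S rule: infinite_finite_induct) (auto simp: qh_add qh_0)

end

definition qmat :: "complex mat \<Rightarrow> bool" where
  "qmat A \<longleftrightarrow> (\<forall>i<dim_row A. \<forall>j<dim_col A. A $$ (i,j) \<in> Qab)"

lemma mult_entry: "A \<in> carrier_mat n k \<Longrightarrow> B \<in> carrier_mat k m \<Longrightarrow> i < n \<Longrightarrow> j < m \<Longrightarrow>
  (A * B) $$ (i,j) = (\<Sum>a<k. A $$ (i,a) * B $$ (a,j))"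
  by (auto simp: scalar_prod_def atLeast0LessThan intro!: sum.cong)

lemma qmat_mult[simp]: "A \<in> carrier_mat n k \<Longrightarrow> B \<in> carrier_mat k m \<Longrightarrow> qmat A \<Longrightarrow> qmat B \<Longrightarrow> qmat (A * B)"
  unfolding qmat_def
proof (intro allI impI)
  fix i j assume "A \<in> carrier_mat n k" "B \<in> carrier_mat k m" and a: "\<forall>i<dim_row A. \<forall>j<dim_col A. A $$ (i, j) \<in> Qab"
    and b: "\<forall>i<dim_row B. \<forall>j<dim_col B. B $$ (i, j) \<in> Qab" and "i < dim_row (A * B)" "j < dim_col (A * B)"
  moreover from this have "(A * B) $$ (i,j) = (\<Sum>a<k. A $$ (i,a) * B $$ (a,j))"
    by (intro mult_entry) auto
  ultimately show "(A * B) $$ (i,j) \<in> Qab" by (auto intro!: Qab_sum Qab_mult)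
qed

lemma qmat_smult[simp]: "c \<in> Qab \<Longrightarrow> qmat A \<Longrightarrow> qmat (c \<cdot>\<^sub>m A)"
  unfolding qmat_def by auto

lemma qmat_one[simp]: "qmat (1\<^sub>m n)"
  unfolding qmat_def by auto

lemma map_mat_mult: assumes "qhom \<sigma>" "A \<in> carrier_mat n k" "B \<in> carrier_mat k m" "qmat A" "qmat B"
  shows "map_mat \<sigma> (A * B) = map_mat \<sigma> A * map_mat \<sigma> B"
proof (rule eq_matI)
  fix i j assume ij: "i < dim_row (map_mat \<sigma> A * map_mat \<sigma> B)" "j < dim_col (map_mat \<sigma> A * map_mat \<sigma> B)"
  then have ij': "i < n" "j < m" using assms by auto
  have "map_mat \<sigma> (A * B) $$ (i,j) = \<sigma> ((A * B) $$ (i,j))" using ij' assms by simp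
  also have "\<dots> = \<sigma> (\<Sum>a<k. A $$ (i,a) * B $$ (a,j))" using ij' assms by (simp only: mult_entry)
  also have "\<dots> = (\<Sum>a<k. \<sigma> (A $$ (i,a)) * \<sigma> (B $$ (a,j)))"
    using ij' assms by (subst qh_sum) (auto simp: qmat_def qh_mult)
  also have "\<dots> = (map_mat \<sigma> A * map_mat \<sigma> B) $$ (i,j)"
    using ij' assms by (subst mult_entry[of _ n k _ m]) auto
  finally show "map_mat \<sigma> (A * B) $$ (i,j) = (map_mat \<sigma> A * map_mat \<sigma> B) $$ (i,j)" .
qed (use assms in auto)

lemma map_mat_smult: assumes "qhom \<sigma>" "c \<in> Qab" "qmat A"
  shows "map_mat \<sigma> (c \<cdot>\<^sub>m A) = \<sigma> c \<cdot>\<^sub>m map_mat \<sigma> A"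
  using assms by (intro eq_matI) (auto simp: qh_mult qmat_def)

lemma map_mat_one: "qhom \<sigma> \<Longrightarrow> map_mat \<sigma> (1\<^sub>m n) = 1\<^sub>m n"
  by (intro eq_matI) (auto simp: qh_0 qh_1)

lemma map_mat_id: "map_mat (\<lambda>z. z) A = A"
  by (intro eq_matI) auto

lemma qmat_map: "qhom \<sigma> \<Longrightarrow> qmat A \<Longrightarrow> qmat (map_mat \<sigma> A)"
  unfolding qmat_def by (auto simp: qh_Qab)

lemma trace_map: "qhom \<sigma> \<Longrightarrow> A \<in> carrier_mat n n \<Longrightarrow> qmat A \<Longrightarrow> mat_trace (map_mat \<sigma> A) = \<sigma> (mat_trace A)"
  unfolding mat_trace_def qmat_def by (subst qh_sum) auto

lemma trace_Qab: "A \<in> carrier_mat n n \<Longrightarrow> qmat A \<Longrightarrow> mat_trace A \<in> Qab"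
  unfolding mat_trace_def qmat_def by (auto intro!: Qab_sum)

lemma trace_one[simp]: "mat_trace (1\<^sub>m n) = of_nat n"
  unfolding mat_trace_def by simp

lemma smult_smult_mat': "a \<cdot>\<^sub>m (b \<cdot>\<^sub>m A) = (a * b) \<cdot>\<^sub>m (A :: complex mat)"
  by (intro eq_matI) auto

lemma nonzero_entry: assumes "A \<in> carrier_mat n n" "B \<in> carrier_mat n n" "A * B = 1\<^sub>m n" "n > 0"
  shows "\<exists>i<n. \<exists>j<n. A $$ (i,j) \<noteq> (0::complex)"
proof (rule ccontr)
  assume "\<not> ?thesis"
  then have z: "\<forall>a<n. A $$ (0,a) = 0" using assms by auto
  have "(A * B) $$ (0,0) = (\<Sum>a<n. A $$ (0,a) * B $$ (a,0))"
    using assms by (intro mult_entry) auto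
  also have "\<dots> = 0" using z by simp
  finally have "(A * B) $$ (0,0) = 0" .
  moreover have "(1\<^sub>m n :: complex mat) $$ (0,0) = 1" using assms by simp
  ultimately show False using assms(3) by simp
qed

lemma smult_cancel: assumes "A \<in> carrier_mat n n" "B \<in> carrier_mat n n" "A * B = 1\<^sub>m n" "n > 0"
  "a \<cdot>\<^sub>m A = b \<cdot>\<^sub>m A" shows "a = (b::complex)"
proof -
  obtain i j where ij: "i < n" "j < n" "A $$ (i,j) \<noteq> 0" using nonzero_entry[OF assms(1-4)] by auto
  have "(a \<cdot>\<^sub>m A) $$ (i,j) = (b \<cdot>\<^sub>m A) $$ (i,j)" using assms(5) by simp
  then show ?thesis using ij assms(1) by simp
qed


lemma mat_vec_entry: "A \<in> carrier_mat n k \<Longrightarrow> v \<in> carrier_vec k \<Longrightarrow> i < n \<Longrightarrow>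
  (A *\<^sub>v v) $ i = (\<Sum>a<k. A $$ (i,a) * v $ a)"
  by (auto simp: scalar_prod_def atLeast0LessThan intro!: sum.cong)

lemma mat_unit_entry: "(A :: complex mat) \<in> carrier_mat n k \<Longrightarrow> i < n \<Longrightarrow> j < k \<Longrightarrow> (A *\<^sub>v unit_vec k j) $ i = A $$ (i,j)"
proof -
  assume a: "A \<in> carrier_mat n k" "i < n" "j < k"
  then have "(A *\<^sub>v unit_vec k j) $ i = (\<Sum>a<k. A $$ (i,a) * unit_vec k j $ a)"
    by (intro mat_vec_entry) auto
  also have "\<dots> = (\<Sum>a<k. if a = j then A $$ (i,a) else 0)"
    by (intro sum.cong) (auto simp: unit_vec_def)
  also have "\<dots> = A $$ (i,j)" using a by (simp add: sum.delta)
  finally show ?thesis .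
qed

lemma schur:
  assumes irr: "irr_rep G N d \<rho>" and A: "A \<in> carrier_mat d d"
    and comm: "\<forall>n\<in>N. A * \<rho> n = \<rho> n * A"
  shows "\<exists>c. A = c \<cdot>\<^sub>m 1\<^sub>m d"
proof -
  have d: "d > 0" and rep: "is_rep G N d \<rho>" using irr unfolding irr_rep_def by auto
  have rc: "\<And>n. n \<in> N \<Longrightarrow> \<rho> n \<in> carrier_mat d d" using rep unfolding is_rep_def by auto
  obtain c where "c \<in> spectrum A" using spectrum_non_empty[OF A d] by auto
  then obtain v where v: "v \<in> carrier_vec d" "v \<noteq> 0\<^sub>v d" "A *\<^sub>v v = c \<cdot>\<^sub>v v"
    unfolding spectrum_def eigenvalue_def eigenvector_def using A by auto
  define W where "W = {w \<in> carrier_vec d. A *\<^sub>v w = c \<cdot>\<^sub>v w}"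
  have "invariant_subspace N d \<rho> W"
    unfolding invariant_subspace_def
  proof (intro conjI ballI allI)
    show "W \<subseteq> carrier_vec d" unfolding W_def by auto
    show "0\<^sub>v d \<in> W" unfolding W_def using A by (auto intro!: eq_vecI simp: mat_vec_entry)
  next
    fix x y assume "x \<in> W" "y \<in> W"
    then show "x + y \<in> W" unfolding W_def using A
      by (auto simp: mult_add_distrib_mat_vec smult_add_distrib_vec)
  next
    fix k x assume "x \<in> W"
    then show "k \<cdot>\<^sub>v x \<in> W" unfolding W_def using A
      by (auto simp: mult_mat_vec smult_smult_assoc mult.commute)
  next
    fix n x assume n: "n \<in> N" and x: "x \<in> W"
    have xc: "x \<in> carrier_vec d" and Ax: "A *\<^sub>v x = c \<cdot>\<^sub>v x" using x unfolding W_def by auto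
    have "A *\<^sub>v (\<rho> n *\<^sub>v x) = (A * \<rho> n) *\<^sub>v x" using A rc[OF n] xc by simp
    also have "\<dots> = (\<rho> n * A) *\<^sub>v x" using comm n by simp
    also have "\<dots> = \<rho> n *\<^sub>v (c \<cdot>\<^sub>v x)" using A rc[OF n] xc Ax by simp
    also have "\<dots> = c \<cdot>\<^sub>v (\<rho> n *\<^sub>v x)" using rc[OF n] xc by (simp add: mult_mat_vec)
    finally show "\<rho> n *\<^sub>v x \<in> W" unfolding W_def using rc[OF n] xc by auto
  qed
  then have "W = {0\<^sub>v d} \<or> W = carrier_vec d" using irr unfolding irr_rep_def by auto
  moreover have "v \<in> W" unfolding W_def using v by auto
  ultimately have WW: "W = carrier_vec d" using v by auto
  have "A = c \<cdot>\<^sub>m 1\<^sub>m d"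
  proof (rule eq_matI)
    fix i j assume ij: "i < dim_row (c \<cdot>\<^sub>m 1\<^sub>m d)" "j < dim_col (c \<cdot>\<^sub>m 1\<^sub>m d)"
    then have ij': "i < d" "j < d" by auto
    have "unit_vec d j \<in> W" using WW by simp
    then have "A *\<^sub>v unit_vec d j = c \<cdot>\<^sub>v unit_vec d j" unfolding W_def by auto
    then have "(A *\<^sub>v unit_vec d j) $ i = (c \<cdot>\<^sub>v unit_vec d j) $ i" by simp
    then show "A $$ (i,j) = (c \<cdot>\<^sub>m 1\<^sub>m d) $$ (i,j)" using ij' A by (simp add: mat_unit_entry)
  qed (use A in auto)
  then show ?thesis by blast
qed


lemma surj_invertible:
  assumes T: "(T :: complex mat) \<in> carrier_mat d d"
    and surj: "\<And>w. w \<in> carrier_vec d \<Longrightarrow> \<exists>v\<in>carrier_vec d. T *\<^sub>v v = w"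
  shows "\<exists>T'\<in>carrier_mat d d. T * T' = 1\<^sub>m d \<and> T' * T = 1\<^sub>m d"
proof -
  have "\<forall>j. \<exists>v. j < d \<longrightarrow> v \<in> carrier_vec d \<and> T *\<^sub>v v = unit_vec d j"
    using surj by (metis unit_vec_carrier)
  then obtain V where V: "\<And>j. j < d \<Longrightarrow> V j \<in> carrier_vec d \<and> T *\<^sub>v V j = unit_vec d j"
    by metis
  define B where "B = mat d d (\<lambda>(i,j). V j $ i)"
  have B: "B \<in> carrier_mat d d" unfolding B_def by simp
  have TB: "T * B = 1\<^sub>m d"
  proof (rule eq_matI)
    fix i j assume "i < dim_row (1\<^sub>m d :: complex mat)" "j < dim_col (1\<^sub>m d :: complex mat)"
    then have ij: "i < d" "j < d" by auto
    have "(T * B) $$ (i,j) = (\<Sum>a<d. T $$ (i,a) * B $$ (a,j))" using T B ij by (intro mult_entry) auto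
    also have "\<dots> = (\<Sum>a<d. T $$ (i,a) * V j $ a)" using ij unfolding B_def by (intro sum.cong) auto
    also have "\<dots> = (T *\<^sub>v V j) $ i" using T V[OF ij(2)] ij by (subst mat_vec_entry) auto
    also have "\<dots> = (1\<^sub>m d :: complex mat) $$ (i,j)" using V[OF ij(2)] ij by simp
    finally show "(T * B) $$ (i,j) = (1\<^sub>m d :: complex mat) $$ (i,j)" .
  qed (use T B in auto)
  then have "B * T = 1\<^sub>m d" using mat_mult_left_right_inverse[OF T B] by simp
  with TB B show ?thesis by blast
qed

locale grpN =
  fixes G :: "('a, 'b) monoid_scheme" and N :: "'a set"
  assumes grp: "group G" and sub: "subgroup N G" and fin: "finite N"

sublocale grpN \<subseteq> G: group G by (rule grp)

context grpN begin

lemma Nc: "n \<in> N \<Longrightarrow> n \<in> carrier G" by (rule subgroup.mem_carrier[OF sub])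
lemma Ninv: "n \<in> N \<Longrightarrow> inv\<^bsub>G\<^esub> n \<in> N" by (rule subgroup.m_inv_closed[OF sub])
lemma Nmult: "n \<in> N \<Longrightarrow> m \<in> N \<Longrightarrow> n \<otimes>\<^bsub>G\<^esub> m \<in> N" by (rule subgroup.m_closed[OF sub])
lemma N_one: "\<one>\<^bsub>G\<^esub> \<in> N" by (rule subgroup.one_closed[OF sub])

lemma rep_carrier: "is_rep G N d \<tau> \<Longrightarrow> n \<in> N \<Longrightarrow> \<tau> n \<in> carrier_mat d d"
  unfolding is_rep_def by auto

lemma rep_mult: "is_rep G N d \<tau> \<Longrightarrow> n \<in> N \<Longrightarrow> m \<in> N \<Longrightarrow> \<tau> (n \<otimes>\<^bsub>G\<^esub> m) = \<tau> n * \<tau> m"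
  unfolding is_rep_def by auto

lemma rep_one: "is_rep G N d \<tau> \<Longrightarrow> \<tau> \<one>\<^bsub>G\<^esub> = 1\<^sub>m d"
  unfolding is_rep_def by auto

lemma rep_inv: assumes "is_rep G N d \<tau>" "n \<in> N"
  shows "\<tau> (inv\<^bsub>G\<^esub> n) * \<tau> n = 1\<^sub>m d" "\<tau> n * \<tau> (inv\<^bsub>G\<^esub> n) = 1\<^sub>m d"
proof -
  have "\<tau> (inv\<^bsub>G\<^esub> n \<otimes>\<^bsub>G\<^esub> n) = \<tau> (inv\<^bsub>G\<^esub> n) * \<tau> n" using assms Ninv by (intro rep_mult) auto
  moreover have "inv\<^bsub>G\<^esub> n \<otimes>\<^bsub>G\<^esub> n = \<one>\<^bsub>G\<^esub>" using assms Nc group.l_inv[OF grp] by blast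
  ultimately show "\<tau> (inv\<^bsub>G\<^esub> n) * \<tau> n = 1\<^sub>m d" using rep_one[OF assms(1)] by simp
  have "\<tau> (n \<otimes>\<^bsub>G\<^esub> inv\<^bsub>G\<^esub> n) = \<tau> n * \<tau> (inv\<^bsub>G\<^esub> n)" using assms Ninv by (intro rep_mult) auto
  moreover have "n \<otimes>\<^bsub>G\<^esub> inv\<^bsub>G\<^esub> n = \<one>\<^bsub>G\<^esub>" using assms Nc group.r_inv[OF grp] by blast
  ultimately show "\<tau> n * \<tau> (inv\<^bsub>G\<^esub> n) = 1\<^sub>m d" using rep_one[OF assms(1)] by simp
qed

definition sc :: "('a \<Rightarrow> complex mat) \<Rightarrow> ('a \<Rightarrow> complex mat) \<Rightarrow> nat \<Rightarrow> nat \<Rightarrow> nat \<Rightarrow> nat \<Rightarrow> complex" where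
  "sc \<rho> \<tau> j k i l = (\<Sum>n\<in>N. \<rho> n $$ (i,j) * \<tau> (inv\<^bsub>G\<^esub> n) $$ (k,l))"

definition Tm :: "('a \<Rightarrow> complex mat) \<Rightarrow> ('a \<Rightarrow> complex mat) \<Rightarrow> nat \<Rightarrow> nat \<Rightarrow> nat \<Rightarrow> complex mat" where
  "Tm \<rho> \<tau> d j k = mat d d (\<lambda>(i,l). sc \<rho> \<tau> j k i l)"

lemma reindex_left: assumes m: "m \<in> N" shows "(\<Sum>n\<in>N. f (m \<otimes>\<^bsub>G\<^esub> n)) = (\<Sum>n\<in>N. f n)"
proof -
  have inj: "inj_on (\<lambda>n. m \<otimes>\<^bsub>G\<^esub> n) N"
    using m Nc unfolding inj_on_def by auto
  have im: "(\<lambda>n. m \<otimes>\<^bsub>G\<^esub> n) ` N = N"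
  proof
    show "(\<lambda>n. m \<otimes>\<^bsub>G\<^esub> n) ` N \<subseteq> N" using m Nmult by auto
    show "N \<subseteq> (\<lambda>n. m \<otimes>\<^bsub>G\<^esub> n) ` N"
    proof
      fix k assume k: "k \<in> N"
      have "k = m \<otimes>\<^bsub>G\<^esub> (inv\<^bsub>G\<^esub> m \<otimes>\<^bsub>G\<^esub> k)"
        using k m Nc by (simp add: G.m_assoc[symmetric])
      moreover have "inv\<^bsub>G\<^esub> m \<otimes>\<^bsub>G\<^esub> k \<in> N" using k m Ninv Nmult by auto
      ultimately show "k \<in> (\<lambda>n. m \<otimes>\<^bsub>G\<^esub> n) ` N" by blast
    qed
  qed
  show ?thesis using sum.reindex[OF inj, of f] im by simp
qed

lemma intertwine:
  assumes r: "is_rep G N d \<rho>" and t: "is_rep G N d \<tau>" and m: "m \<in> N" and jk: "j < d" "k < d"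
  shows "\<rho> m * Tm \<rho> \<tau> d j k = Tm \<rho> \<tau> d j k * \<tau> m"
proof (rule eq_matI)
  have rc: "\<And>n. n \<in> N \<Longrightarrow> \<rho> n \<in> carrier_mat d d" using r rep_carrier by blast
  have tc: "\<And>n. n \<in> N \<Longrightarrow> \<tau> n \<in> carrier_mat d d" using t rep_carrier by blast
  have T: "Tm \<rho> \<tau> d j k \<in> carrier_mat d d" unfolding Tm_def by simp
  fix i l assume "i < dim_row (Tm \<rho> \<tau> d j k * \<tau> m)" "l < dim_col (Tm \<rho> \<tau> d j k * \<tau> m)"
  then have il: "i < d" "l < d" unfolding Tm_def using tc[OF m] by auto
  have "(\<rho> m * Tm \<rho> \<tau> d j k) $$ (i,l) = (\<Sum>a<d. \<rho> m $$ (i,a) * Tm \<rho> \<tau> d j k $$ (a,l))"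
    using rc[OF m] T il by (intro mult_entry) auto
  also have "\<dots> = (\<Sum>a<d. \<rho> m $$ (i,a) * (\<Sum>n\<in>N. \<rho> n $$ (a,j) * \<tau> (inv\<^bsub>G\<^esub> n) $$ (k,l)))"
    using il unfolding Tm_def sc_def by (intro sum.cong) auto
  also have "\<dots> = (\<Sum>n\<in>N. (\<Sum>a<d. \<rho> m $$ (i,a) * \<rho> n $$ (a,j)) * \<tau> (inv\<^bsub>G\<^esub> n) $$ (k,l))"
    unfolding sum_distrib_left sum_distrib_right mult.assoc by (rule sum.swap)
  also have "\<dots> = (\<Sum>n\<in>N. \<rho> (m \<otimes>\<^bsub>G\<^esub> n) $$ (i,j) * \<tau> (inv\<^bsub>G\<^esub> (m \<otimes>\<^bsub>G\<^esub> n) \<otimes>\<^bsub>G\<^esub> m) $$ (k,l))"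
  proof (intro sum.cong refl)
    fix n assume n: "n \<in> N"
    have "j < d \<Longrightarrow> (\<Sum>a<d. \<rho> m $$ (i,a) * \<rho> n $$ (a,j)) = \<rho> (m \<otimes>\<^bsub>G\<^esub> n) $$ (i,j)"
      using rep_mult[OF r m n] rc m n il by (simp add: mult_entry[of _ d d _ d])
    moreover have "inv\<^bsub>G\<^esub> (m \<otimes>\<^bsub>G\<^esub> n) \<otimes>\<^bsub>G\<^esub> m = inv\<^bsub>G\<^esub> n"
      using m n Nc by (simp add: G.inv_mult_group G.m_assoc)
    ultimately show "(\<Sum>a<d. \<rho> m $$ (i,a) * \<rho> n $$ (a,j)) * \<tau> (inv\<^bsub>G\<^esub> n) $$ (k,l) =
       \<rho> (m \<otimes>\<^bsub>G\<^esub> n) $$ (i,j) * \<tau> (inv\<^bsub>G\<^esub> (m \<otimes>\<^bsub>G\<^esub> n) \<otimes>\<^bsub>G\<^esub> m) $$ (k,l)"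
      using jk by simp
  qed
  also have "\<dots> = (\<Sum>n\<in>N. \<rho> n $$ (i,j) * \<tau> (inv\<^bsub>G\<^esub> n \<otimes>\<^bsub>G\<^esub> m) $$ (k,l))"
    using reindex_left[OF m, of "\<lambda>n. \<rho> n $$ (i,j) * \<tau> (inv\<^bsub>G\<^esub> n \<otimes>\<^bsub>G\<^esub> m) $$ (k,l)"] by simp
  also have "\<dots> = (\<Sum>n\<in>N. \<rho> n $$ (i,j) * (\<Sum>b<d. \<tau> (inv\<^bsub>G\<^esub> n) $$ (k,b) * \<tau> m $$ (b,l)))"
  proof (intro sum.cong refl)
    fix n assume n: "n \<in> N"
    have "(\<tau> (inv\<^bsub>G\<^esub> n) * \<tau> m) $$ (k,l) = (\<Sum>b<d. \<tau> (inv\<^bsub>G\<^esub> n) $$ (k,b) * \<tau> m $$ (b,l))"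
      using tc[OF Ninv[OF n]] tc[OF m] jk il by (intro mult_entry) auto
    moreover have "\<tau> (inv\<^bsub>G\<^esub> n \<otimes>\<^bsub>G\<^esub> m) = \<tau> (inv\<^bsub>G\<^esub> n) * \<tau> m"
      by (rule rep_mult[OF t Ninv[OF n] m])
    ultimately show "\<rho> n $$ (i,j) * \<tau> (inv\<^bsub>G\<^esub> n \<otimes>\<^bsub>G\<^esub> m) $$ (k,l) =
       \<rho> n $$ (i,j) * (\<Sum>b<d. \<tau> (inv\<^bsub>G\<^esub> n) $$ (k,b) * \<tau> m $$ (b,l))" by simp
  qed
  also have "\<dots> = (\<Sum>b<d. Tm \<rho> \<tau> d j k $$ (i,b) * \<tau> m $$ (b,l))"
  proof -
    have "(\<Sum>b<d. Tm \<rho> \<tau> d j k $$ (i,b) * \<tau> m $$ (b,l)) = (\<Sum>b<d. (\<Sum>n\<in>N. \<rho> n $$ (i,j) * \<tau> (inv\<^bsub>G\<^esub> n) $$ (k,b)) * \<tau> m $$ (b,l))"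
      using il unfolding Tm_def sc_def by (intro sum.cong) auto
    also have "\<dots> = (\<Sum>n\<in>N. \<rho> n $$ (i,j) * (\<Sum>b<d. \<tau> (inv\<^bsub>G\<^esub> n) $$ (k,b) * \<tau> m $$ (b,l)))"
      unfolding sum_distrib_left sum_distrib_right mult.assoc by (rule sum.swap)
    finally show ?thesis by (rule sym)
  qed
  also have "\<dots> = (Tm \<rho> \<tau> d j k * \<tau> m) $$ (i,l)"
    using tc[OF m] T il by (intro mult_entry[symmetric]) auto
  finally show "(\<rho> m * Tm \<rho> \<tau> d j k) $$ (i,l) = (Tm \<rho> \<tau> d j k * \<tau> m) $$ (i,l)" .
qed (use m rep_carrier[OF r m] rep_carrier[OF t m] in \<open>auto simp: Tm_def\<close>)

end

context grpN begin

lemma Tm_carrier: "Tm \<rho> \<tau> d j k \<in> carrier_mat d d" unfolding Tm_def by simp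

lemma Tm_entry: "i < d \<Longrightarrow> l < d \<Longrightarrow> Tm \<rho> \<tau> d j k $$ (i,l) = sc \<rho> \<tau> j k i l"
  unfolding Tm_def by simp

lemma rep_trace: "is_rep G N d \<tau> \<Longrightarrow> n \<in> N \<Longrightarrow> mat_trace (\<tau> n) = (\<Sum>i<d. \<tau> n $$ (i,i))"
  using rep_carrier unfolding mat_trace_def by (metis carrier_matD(1))

lemma trace_prod_sum:
  assumes r: "is_rep G N d \<rho>" and t: "is_rep G N d \<tau>"
  shows "(\<Sum>n\<in>N. mat_trace (\<rho> n) * mat_trace (\<tau> (inv\<^bsub>G\<^esub> n))) = (\<Sum>i<d. \<Sum>j<d. sc \<rho> \<tau> i j i j)"
proof -
  have "(\<Sum>n\<in>N. mat_trace (\<rho> n) * mat_trace (\<tau> (inv\<^bsub>G\<^esub> n)))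
      = (\<Sum>n\<in>N. \<Sum>i<d. \<Sum>j<d. \<rho> n $$ (i,i) * \<tau> (inv\<^bsub>G\<^esub> n) $$ (j,j))"
  proof (intro sum.cong refl)
    fix n assume n: "n \<in> N"
    show "mat_trace (\<rho> n) * mat_trace (\<tau> (inv\<^bsub>G\<^esub> n)) = (\<Sum>i<d. \<Sum>j<d. \<rho> n $$ (i,i) * \<tau> (inv\<^bsub>G\<^esub> n) $$ (j,j))"
      using rep_trace[OF r n] rep_trace[OF t Ninv[OF n]] by (simp add: sum_product)
  qed
  also have "\<dots> = (\<Sum>i<d. \<Sum>n\<in>N. \<Sum>j<d. \<rho> n $$ (i,i) * \<tau> (inv\<^bsub>G\<^esub> n) $$ (j,j))"
    by (rule sum.swap)
  also have "\<dots> = (\<Sum>i<d. \<Sum>j<d. \<Sum>n\<in>N. \<rho> n $$ (i,i) * \<tau> (inv\<^bsub>G\<^esub> n) $$ (j,j))"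
    by (intro sum.cong refl) (rule sum.swap)
  also have "\<dots> = (\<Sum>i<d. \<Sum>j<d. sc \<rho> \<tau> i j i j)"
    unfolding sc_def ..
  finally show ?thesis .
qed

lemma ortho_self:
  assumes irr: "irr_rep G N d \<rho>" and jk: "j < d" "k < d" and il: "i < d" "l < d"
  shows "sc \<rho> \<rho> j k i l = (if i = l \<and> j = k then of_nat (card N) / of_nat d else 0)"
proof -
  have r: "is_rep G N d \<rho>" and d: "d > 0" using irr unfolding irr_rep_def by auto
  have comm: "\<forall>n\<in>N. Tm \<rho> \<rho> d j k * \<rho> n = \<rho> n * Tm \<rho> \<rho> d j k"
    using intertwine[OF r r _ jk] by simp
  obtain c where Tc: "Tm \<rho> \<rho> d j k = c \<cdot>\<^sub>m 1\<^sub>m d" using schur[OF irr Tm_carrier comm] by blast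
  have ent: "\<And>i l. i < d \<Longrightarrow> l < d \<Longrightarrow> sc \<rho> \<rho> j k i l = (if i = l then c else 0)"
  proof -
    fix i l assume "i < d" "l < d"
    then have "Tm \<rho> \<rho> d j k $$ (i,l) = (c \<cdot>\<^sub>m 1\<^sub>m d) $$ (i,l)" using Tc by simp
    then show "sc \<rho> \<rho> j k i l = (if i = l then c else 0)" using \<open>i < d\<close> \<open>l < d\<close> by (simp add: Tm_entry)
  qed
  have s1: "(\<Sum>i<d. sc \<rho> \<rho> j k i i) = of_nat d * c" using ent by simp
  have "(\<Sum>i<d. sc \<rho> \<rho> j k i i) = (\<Sum>n\<in>N. \<Sum>i<d. \<rho> (inv\<^bsub>G\<^esub> n) $$ (k,i) * \<rho> n $$ (i,j))"
    unfolding sc_def by (subst sum.swap) (simp add: mult.commute)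
  also have "\<dots> = (\<Sum>n\<in>N. (\<rho> (inv\<^bsub>G\<^esub> n) * \<rho> n) $$ (k,j))"
  proof (intro sum.cong refl)
    fix n assume n: "n \<in> N"
    show "(\<Sum>i<d. \<rho> (inv\<^bsub>G\<^esub> n) $$ (k,i) * \<rho> n $$ (i,j)) = (\<rho> (inv\<^bsub>G\<^esub> n) * \<rho> n) $$ (k,j)"
      using rep_carrier[OF r n] rep_carrier[OF r Ninv[OF n]] jk by (intro mult_entry[symmetric]) auto
  qed
  also have "\<dots> = (\<Sum>n\<in>N. (1\<^sub>m d :: complex mat) $$ (k,j))"
    using rep_inv[OF r] by simp
  also have "\<dots> = of_nat (card N) * (if k = j then 1 else 0)" using jk by simp
  finally have "of_nat d * c = of_nat (card N) * (if k = j then 1 else 0)" using s1 by simp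
  then have "c = of_nat (card N) * (if k = j then 1 else 0) / of_nat d" using d
    by (simp add: field_simps)
  then show ?thesis using ent[OF il] by auto
qed

lemma char_norm:
  assumes irr: "irr_rep G N d \<rho>"
  shows "(\<Sum>n\<in>N. mat_trace (\<rho> n) * mat_trace (\<rho> (inv\<^bsub>G\<^esub> n))) = of_nat (card N)"
proof -
  have r: "is_rep G N d \<rho>" and d: "d > 0" using irr unfolding irr_rep_def by auto
  have "(\<Sum>n\<in>N. mat_trace (\<rho> n) * mat_trace (\<rho> (inv\<^bsub>G\<^esub> n))) = (\<Sum>i<d. \<Sum>j<d. sc \<rho> \<rho> i j i j)"
    by (rule trace_prod_sum[OF r r])
  also have "\<dots> = (\<Sum>i<d. \<Sum>j<d. if i = j then of_nat (card N) / of_nat d else 0)"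
    using ortho_self[OF irr] by (intro sum.cong refl) auto
  also have "\<dots> = (\<Sum>i<d. of_nat (card N) / (of_nat d :: complex))" by simp
  also have "\<dots> = of_nat (card N)" using d by simp
  finally show ?thesis .
qed

lemma intertwiner_inv:
  assumes irr: "irr_rep G N d \<rho>" and t: "is_rep G N d \<tau>" and T: "T \<in> carrier_mat d d"
    and nz: "i0 < d" "j0 < d" "T $$ (i0,j0) \<noteq> 0"
    and int: "\<forall>n\<in>N. \<rho> n * T = T * \<tau> n"
  shows "\<exists>T'\<in>carrier_mat d d. T * T' = 1\<^sub>m d \<and> T' * T = 1\<^sub>m d"
proof (rule surj_invertible[OF T])
  define W where "W = {T *\<^sub>v v | v. v \<in> carrier_vec d}"
  have "invariant_subspace N d \<rho> W"
    unfolding invariant_subspace_def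
  proof (intro conjI ballI allI)
    show "W \<subseteq> carrier_vec d" unfolding W_def using T by auto
    have h: "T *\<^sub>v 0\<^sub>v d = 0\<^sub>v d" using T by (auto intro!: eq_vecI simp: mat_vec_entry)
    show "0\<^sub>v d \<in> W" unfolding W_def
    proof (intro CollectI exI conjI)
      show "0\<^sub>v d = T *\<^sub>v 0\<^sub>v d" using h by simp
      show "0\<^sub>v d \<in> carrier_vec d" by simp
    qed
  next
    fix x y assume "x \<in> W" "y \<in> W"
    then obtain v w where "v \<in> carrier_vec d" "w \<in> carrier_vec d" "x = T *\<^sub>v v" "y = T *\<^sub>v w"
      unfolding W_def by auto
    then have "x + y = T *\<^sub>v (v + w)" "v + w \<in> carrier_vec d" using T by (auto simp: mult_add_distrib_mat_vec)
    then show "x + y \<in> W" unfolding W_def by blast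
  next
    fix c x assume "x \<in> W"
    then obtain v where "v \<in> carrier_vec d" "x = T *\<^sub>v v" unfolding W_def by auto
    then have "c \<cdot>\<^sub>v x = T *\<^sub>v (c \<cdot>\<^sub>v v)" "c \<cdot>\<^sub>v v \<in> carrier_vec d" using T by (auto simp: mult_mat_vec)
    then show "c \<cdot>\<^sub>v x \<in> W" unfolding W_def by blast
  next
    fix n x assume n: "n \<in> N" and "x \<in> W"
    then obtain v where v: "v \<in> carrier_vec d" "x = T *\<^sub>v v" unfolding W_def by auto
    have rc: "\<rho> n \<in> carrier_mat d d" using irr n rep_carrier unfolding irr_rep_def by blast
    have tc: "\<tau> n \<in> carrier_mat d d" using t n rep_carrier by blast
    have "\<rho> n *\<^sub>v x = (\<rho> n * T) *\<^sub>v v" using v rc T by simp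
    also have "\<dots> = (T * \<tau> n) *\<^sub>v v" using int n by simp
    also have "\<dots> = T *\<^sub>v (\<tau> n *\<^sub>v v)" using T tc v by simp
    finally show "\<rho> n *\<^sub>v x \<in> W" unfolding W_def using tc v by auto
  qed
  then have "W = {0\<^sub>v d} \<or> W = carrier_vec d" using irr unfolding irr_rep_def by auto
  moreover have "T *\<^sub>v unit_vec d j0 \<in> W" unfolding W_def by auto
  moreover have "(T *\<^sub>v unit_vec d j0) $ i0 \<noteq> 0" using mat_unit_entry[OF T nz(1,2)] nz by simp
  moreover have "(0\<^sub>v d :: complex vec) $ i0 = 0" using nz by simp
  ultimately have WW: "W = carrier_vec d" by force
  fix w :: "complex vec" assume "w \<in> carrier_vec d"
  then have "w \<in> W" using WW by simp
  then show "\<exists>v\<in>carrier_vec d. T *\<^sub>v v = w" unfolding W_def by auto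
qed

lemma similar_irr:
  assumes irr: "irr_rep G N d \<rho>" and t: "is_rep G N d' \<tau>"
    and tr: "\<forall>n\<in>N. mat_trace (\<tau> n) = mat_trace (\<rho> n)"
  shows "d' = d \<and> (\<exists>T\<in>carrier_mat d d. \<exists>T'\<in>carrier_mat d d. T * T' = 1\<^sub>m d \<and> T' * T = 1\<^sub>m d \<and>
     (\<forall>n\<in>N. \<rho> n * T = T * \<tau> n))"
proof -
  have r: "is_rep G N d \<rho>" and d: "d > 0" using irr unfolding irr_rep_def by auto
  have "mat_trace (\<tau> \<one>\<^bsub>G\<^esub>) = mat_trace (\<rho> \<one>\<^bsub>G\<^esub>)" using tr N_one by blast
  then have "(of_nat d' :: complex) = of_nat d" using rep_one[OF r] rep_one[OF t] by simp
  then have dd: "d' = d" by simp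
  have t': "is_rep G N d \<tau>" using t dd by simp
  have "(\<Sum>i<d. \<Sum>j<d. sc \<rho> \<tau> i j i j) = (\<Sum>n\<in>N. mat_trace (\<rho> n) * mat_trace (\<tau> (inv\<^bsub>G\<^esub> n)))"
    by (rule trace_prod_sum[OF r t', symmetric])
  also have "\<dots> = (\<Sum>n\<in>N. mat_trace (\<rho> n) * mat_trace (\<rho> (inv\<^bsub>G\<^esub> n)))"
    using tr Ninv by (intro sum.cong refl) auto
  also have "\<dots> = of_nat (card N)" by (rule char_norm[OF irr])
  finally have "(\<Sum>i<d. \<Sum>j<d. sc \<rho> \<tau> i j i j) \<noteq> 0" using fin N_one card_0_eq by fastforce
  then obtain i j where ij: "i < d" "j < d" "sc \<rho> \<tau> i j i j \<noteq> 0"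
    by (metis (no_types, lifting) lessThan_iff sum.neutral)
  have nz: "Tm \<rho> \<tau> d i j $$ (i,j) \<noteq> 0" using ij by (simp add: Tm_entry)
  have int: "\<forall>n\<in>N. \<rho> n * Tm \<rho> \<tau> d i j = Tm \<rho> \<tau> d i j * \<tau> n"
    using intertwine[OF r t' _ ij(1,2)] by simp
  obtain T' where "T' \<in> carrier_mat d d" "Tm \<rho> \<tau> d i j * T' = 1\<^sub>m d" "T' * Tm \<rho> \<tau> d i j = 1\<^sub>m d"
    using intertwiner_inv[OF irr t' Tm_carrier ij(1,2) nz int] by blast
  then show ?thesis using dd Tm_carrier int by blast
qed

end

lemma trace_comm: assumes "A \<in> carrier_mat n n" "B \<in> carrier_mat n n"
  shows "mat_trace (A * B) = mat_trace (B * (A :: complex mat))"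
proof -
  have "mat_trace (A * B) = (\<Sum>i<n. (A * B) $$ (i,i))" unfolding mat_trace_def using assms by simp
  also have "\<dots> = (\<Sum>i<n. \<Sum>a<n. A $$ (i,a) * B $$ (a,i))"
    by (rule sum.cong[OF refl], rule mult_entry) (use assms in auto)
  also have "\<dots> = (\<Sum>a<n. \<Sum>i<n. B $$ (a,i) * A $$ (i,a))"
    by (subst sum.swap) (simp add: mult.commute)
  also have "\<dots> = (\<Sum>i<n. (B * A) $$ (i,i))"
    by (rule sum.cong[OF refl], rule mult_entry[symmetric]) (use assms in auto)
  also have "\<dots> = mat_trace (B * A)" unfolding mat_trace_def using assms by simp
  finally show ?thesis .
qed

lemma assoc_ext: "A \<in> carrier_mat n n \<Longrightarrow> B \<in> carrier_mat n n \<Longrightarrow> C \<in> carrier_mat n n \<Longrightarrow> D \<in> carrier_mat n n \<Longrightarrow>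
  A * B = C * D \<Longrightarrow> X \<in> carrier_mat n k \<Longrightarrow> A * (B * X) = C * (D * (X :: complex mat))"
proof -
  assume c: "A \<in> carrier_mat n n" "B \<in> carrier_mat n n" "C \<in> carrier_mat n n" "D \<in> carrier_mat n n"
    and e: "A * B = C * D" and X: "X \<in> carrier_mat n k"
  have "A * (B * X) = (A * B) * X" by (rule assoc_mult_mat[symmetric]) (use c X in auto)
  also have "\<dots> = (C * D) * X" using e by simp
  also have "\<dots> = C * (D * X)" by (rule assoc_mult_mat) (use c X in auto)
  finally show ?thesis .
qed

lemma one_ext: "A \<in> carrier_mat n n \<Longrightarrow> B \<in> carrier_mat n n \<Longrightarrow>
  A * B = 1\<^sub>m n \<Longrightarrow> X \<in> carrier_mat n k \<Longrightarrow> A * (B * X) = (X :: complex mat)"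
proof -
  assume c: "A \<in> carrier_mat n n" "B \<in> carrier_mat n n" and e: "A * B = 1\<^sub>m n" and X: "X \<in> carrier_mat n k"
  have "A * (B * X) = (A * B) * X" by (rule assoc_mult_mat[symmetric]) (use c X in auto)
  also have "\<dots> = X" using e X by simp
  finally show ?thesis .
qed

lemma mc_dd: "A \<in> carrier_mat n n \<Longrightarrow> B \<in> carrier_mat n n \<Longrightarrow> A * B \<in> carrier_mat n n"
  by simp
lemma assoc_dd: "A \<in> carrier_mat n n \<Longrightarrow> B \<in> carrier_mat n n \<Longrightarrow> C \<in> carrier_mat n n \<Longrightarrow>
  (A * B) * C = A * (B * (C :: complex mat))" by simp
lemma smult_l: "A \<in> carrier_mat n n \<Longrightarrow> B \<in> carrier_mat n n \<Longrightarrow> (k \<cdot>\<^sub>m A) * B = k \<cdot>\<^sub>m (A * (B :: complex mat))"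
  by (rule mult_smult_assoc_mat)
lemma smult_r: "A \<in> carrier_mat n n \<Longrightarrow> B \<in> carrier_mat n n \<Longrightarrow> A * (k \<cdot>\<^sub>m B) = k \<cdot>\<^sub>m (A * (B :: complex mat))"
  by (rule mult_smult_distrib)
lemma one_l: "A \<in> carrier_mat n n \<Longrightarrow> 1\<^sub>m n * A = (A :: complex mat)" by simp
lemma one_r: "A \<in> carrier_mat n n \<Longrightarrow> A * 1\<^sub>m n = (A :: complex mat)" by simp

lemmas dd = mc_dd assoc_dd smult_l smult_r one_l one_r smult_smult_mat' smult_carrier_mat one_carrier_mat

locale setting =
  fixes G :: "('a, 'b) monoid_scheme" and N :: "'a set" and \<theta> :: "'a \<Rightarrow> complex"
    and d :: nat and P :: "'a \<Rightarrow> complex mat" and \<alpha> :: "'a \<Rightarrow> 'a \<Rightarrow> complex"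
  assumes grp: "group G" and finG: "finite (carrier G)" and nrm: "N \<lhd> G"
    and irrc: "irr_char G N \<theta>"
    and pr: "proj_rep G (stab G N \<theta>) d P \<alpha>"
    and as: "associated G N \<theta> d P"
    and qe: "\<forall>y\<in>stab G N \<theta>. \<forall>i<d. \<forall>j<d. P y $$ (i, j) \<in> Qab"

sublocale setting \<subseteq> G: group G by (rule grp)

context setting begin

abbreviation "S \<equiv> stab G N \<theta>"

lemma subN: "subgroup N G" by (rule normal_imp_subgroup[OF nrm])
lemma finN: "finite N" using finite_subset[OF subgroup.subset[OF subN] finG] .

sublocale gN: grpN G N by (rule grpN.intro) (rule grp, rule subN, rule finN)

lemma Gc1: "x \<in> carrier G \<Longrightarrow> y \<in> carrier G \<Longrightarrow> x \<otimes>\<^bsub>G\<^esub> (inv\<^bsub>G\<^esub> x \<otimes>\<^bsub>G\<^esub> y) = y"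
  by (simp add: G.m_assoc[symmetric])
lemma Gc2: "x \<in> carrier G \<Longrightarrow> y \<in> carrier G \<Longrightarrow> inv\<^bsub>G\<^esub> x \<otimes>\<^bsub>G\<^esub> (x \<otimes>\<^bsub>G\<^esub> y) = y"
  by (simp add: G.m_assoc[symmetric])

lemma Nc': "n \<in> N \<Longrightarrow> n \<in> carrier G" by (rule gN.Nc)

lemma conjN: "x \<in> carrier G \<Longrightarrow> n \<in> N \<Longrightarrow> x \<otimes>\<^bsub>G\<^esub> n \<otimes>\<^bsub>G\<^esub> inv\<^bsub>G\<^esub> x \<in> N"
  by (rule normal.inv_op_closed2[OF nrm])

lemma Prep: "is_rep G N d P" using as unfolding associated_def by auto
lemma Ptr: "n \<in> N \<Longrightarrow> mat_trace (P n) = \<theta> n" using as unfolding associated_def by auto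
lemma Pleft: "n \<in> N \<Longrightarrow> g \<in> S \<Longrightarrow> P (n \<otimes>\<^bsub>G\<^esub> g) = P n * P g" using as unfolding associated_def by auto
lemma Pright: "n \<in> N \<Longrightarrow> g \<in> S \<Longrightarrow> P (g \<otimes>\<^bsub>G\<^esub> n) = P g * P n" using as unfolding associated_def by auto
lemma P1: "P \<one>\<^bsub>G\<^esub> = 1\<^sub>m d" using Prep unfolding is_rep_def by auto

lemma Pc: "y \<in> S \<Longrightarrow> P y \<in> carrier_mat d d" using pr unfolding proj_rep_def by auto
lemma Pinvertible: "y \<in> S \<Longrightarrow> invertible_mat (P y)" using pr unfolding proj_rep_def by auto
lemma Pmult: "x \<in> S \<Longrightarrow> y \<in> S \<Longrightarrow> P x * P y = \<alpha> x y \<cdot>\<^sub>m P (x \<otimes>\<^bsub>G\<^esub> y)" using pr unfolding proj_rep_def by auto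
lemma \<alpha>nz: "x \<in> S \<Longrightarrow> y \<in> S \<Longrightarrow> \<alpha> x y \<noteq> 0" using pr unfolding proj_rep_def by auto
lemma Pq: assumes y: "y \<in> S" shows "qmat (P y)"
proof -
  have "dim_row (P y) = d" "dim_col (P y) = d" using Pc[OF y] by auto
  then show ?thesis using qe y unfolding qmat_def by auto
qed

lemma Sc: "y \<in> S \<Longrightarrow> y \<in> carrier G" unfolding stab_def by auto

lemma stab_iff: "g \<in> S \<longleftrightarrow> g \<in> carrier G \<and> (\<forall>n\<in>N. \<theta> (g \<otimes>\<^bsub>G\<^esub> n \<otimes>\<^bsub>G\<^esub> inv\<^bsub>G\<^esub> g) = \<theta> n)"
  unfolding stab_def fixes_char_def by auto

lemma S_one: "\<one>\<^bsub>G\<^esub> \<in> S"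
  unfolding stab_iff using Nc' by auto

lemma S_mult: assumes "g \<in> S" "h \<in> S" shows "g \<otimes>\<^bsub>G\<^esub> h \<in> S"
proof -
  have g: "g \<in> carrier G" and h: "h \<in> carrier G" using assms Sc by auto
  have "\<theta> ((g \<otimes>\<^bsub>G\<^esub> h) \<otimes>\<^bsub>G\<^esub> n \<otimes>\<^bsub>G\<^esub> inv\<^bsub>G\<^esub> (g \<otimes>\<^bsub>G\<^esub> h)) = \<theta> n" if n: "n \<in> N" for n
  proof -
    have e: "(g \<otimes>\<^bsub>G\<^esub> h) \<otimes>\<^bsub>G\<^esub> n \<otimes>\<^bsub>G\<^esub> inv\<^bsub>G\<^esub> (g \<otimes>\<^bsub>G\<^esub> h) = g \<otimes>\<^bsub>G\<^esub> (h \<otimes>\<^bsub>G\<^esub> n \<otimes>\<^bsub>G\<^esub> inv\<^bsub>G\<^esub> h) \<otimes>\<^bsub>G\<^esub> inv\<^bsub>G\<^esub> g"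
      using g h Nc'[OF n] by (simp add: G.inv_mult_group G.m_assoc)
    have "h \<otimes>\<^bsub>G\<^esub> n \<otimes>\<^bsub>G\<^esub> inv\<^bsub>G\<^esub> h \<in> N" using conjN h n by blast
    then show ?thesis unfolding e using assms n stab_iff by metis
  qed
  then show ?thesis unfolding stab_iff using g h by auto
qed

lemma S_inv: assumes "g \<in> S" shows "inv\<^bsub>G\<^esub> g \<in> S"
proof -
  have g: "g \<in> carrier G" using assms Sc by auto
  have "\<theta> (inv\<^bsub>G\<^esub> g \<otimes>\<^bsub>G\<^esub> n \<otimes>\<^bsub>G\<^esub> inv\<^bsub>G\<^esub> (inv\<^bsub>G\<^esub> g)) = \<theta> n" if n: "n \<in> N" for n
  proof -
    let ?m = "inv\<^bsub>G\<^esub> g \<otimes>\<^bsub>G\<^esub> n \<otimes>\<^bsub>G\<^esub> inv\<^bsub>G\<^esub> (inv\<^bsub>G\<^esub> g)"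
    have m: "?m \<in> N" using conjN[OF G.inv_closed[OF g] n] .
    have "g \<otimes>\<^bsub>G\<^esub> ?m \<otimes>\<^bsub>G\<^esub> inv\<^bsub>G\<^esub> g = n"
      using g Nc'[OF n] by (simp add: G.m_assoc Gc1)
    then show ?thesis using assms m stab_iff by metis
  qed
  then show ?thesis unfolding stab_iff using g by auto
qed

lemma N_sub_S: assumes n: "n \<in> N" shows "n \<in> S"
proof -
  have nc: "n \<in> carrier G" using Nc' n .
  have "\<theta> (n \<otimes>\<^bsub>G\<^esub> m \<otimes>\<^bsub>G\<^esub> inv\<^bsub>G\<^esub> n) = \<theta> m" if m: "m \<in> N" for m
  proof -
    have inN: "inv\<^bsub>G\<^esub> n \<in> N" using gN.Ninv n .
    have c: "P n \<in> carrier_mat d d" "P m \<in> carrier_mat d d" "P (inv\<^bsub>G\<^esub> n) \<in> carrier_mat d d"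
      using gN.rep_carrier[OF Prep] n m inN by auto
    have "P (n \<otimes>\<^bsub>G\<^esub> m \<otimes>\<^bsub>G\<^esub> inv\<^bsub>G\<^esub> n) = P n * P m * P (inv\<^bsub>G\<^esub> n)"
      using Prep n m inN gN.Nmult by (simp add: gN.rep_mult)
    then have "mat_trace (P (n \<otimes>\<^bsub>G\<^esub> m \<otimes>\<^bsub>G\<^esub> inv\<^bsub>G\<^esub> n)) = mat_trace (P n * P m * P (inv\<^bsub>G\<^esub> n))" by simp
    also have "\<dots> = mat_trace (P (inv\<^bsub>G\<^esub> n) * (P n * P m))"
      using c by (intro trace_comm[of _ d]) auto
    also have "\<dots> = mat_trace (P (inv\<^bsub>G\<^esub> n) * P n * P m)"
      using c by simp
    also have "\<dots> = mat_trace (P m)" using gN.rep_inv[OF Prep n] gN.rep_carrier[OF Prep m] by simp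
    finally show ?thesis using Ptr m n inN gN.Nmult by (metis conjN nc)
  qed
  then show ?thesis unfolding stab_iff using nc by auto
qed

lemma rho_ex: "\<exists>\<rho> T T'. irr_rep G N d \<rho> \<and> T \<in> carrier_mat d d \<and> T' \<in> carrier_mat d d \<and>
   T * T' = 1\<^sub>m d \<and> T' * T = 1\<^sub>m d \<and> (\<forall>n\<in>N. \<rho> n * T = T * P n)"
proof -
  obtain d0 \<rho> where irr: "irr_rep G N d0 \<rho>" and tr: "\<forall>n\<in>N. \<theta> n = mat_trace (\<rho> n)"
    using irrc unfolding irr_char_def by blast
  have "\<forall>n\<in>N. mat_trace (P n) = mat_trace (\<rho> n)" using tr Ptr by simp
  from gN.similar_irr[OF irr Prep this] have "d = d0" and
    "\<exists>T\<in>carrier_mat d0 d0. \<exists>T'\<in>carrier_mat d0 d0. T * T' = 1\<^sub>m d0 \<and> T' * T = 1\<^sub>m d0 \<and> (\<forall>n\<in>N. \<rho> n * T = T * P n)"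
    by auto
  then show ?thesis using irr by blast
qed

lemma dpos: "d > 0"
proof -
  obtain \<rho> where "irr_rep G N d \<rho>" using rho_ex by blast
  then show ?thesis unfolding irr_rep_def by simp
qed

lemma commutant: assumes A: "A \<in> carrier_mat d d" and comm: "\<forall>n\<in>N. A * P n = P n * A"
  shows "\<exists>c. A = c \<cdot>\<^sub>m 1\<^sub>m d"
proof -
  obtain \<rho> T T' where irr: "irr_rep G N d \<rho>" and T: "T \<in> carrier_mat d d" "T' \<in> carrier_mat d d"
    "T * T' = 1\<^sub>m d" "T' * T = 1\<^sub>m d" and int: "\<forall>n\<in>N. \<rho> n * T = T * P n"
    using rho_ex by blast
  have ir: "is_rep G N d \<rho>" using irr unfolding irr_rep_def by simp
  have rc: "\<And>n. n \<in> N \<Longrightarrow> \<rho> n \<in> carrier_mat d d" by (rule gN.rep_carrier[OF ir])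
  have Pnc: "\<And>n. n \<in> N \<Longrightarrow> P n \<in> carrier_mat d d" by (rule Pc[OF N_sub_S])
  have rho: "\<rho> n = T * (P n * T')" if n: "n \<in> N" for n
  proof -
    have "\<rho> n = \<rho> n * (T * T')" using T rc[OF n] by simp
    also have "\<dots> = T * (P n * T')" by (rule assoc_ext[OF rc[OF n] T(1) T(1) Pnc[OF n] _ T(2)]) (use int n in simp)
    finally show ?thesis .
  qed
  have "T * (A * T') * \<rho> n = \<rho> n * (T * (A * T'))" if n: "n \<in> N" for n
  proof -
    have e1: "T' * (T * X) = X" if "X \<in> carrier_mat d d" for X using one_ext[OF T(2) T(1) T(4) that] .
    have e2: "A * (P n * X) = P n * (A * X)" if "X \<in> carrier_mat d d" for X
      using assoc_ext[OF A Pnc[OF n] Pnc[OF n] A _ that] comm n by simp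
    show ?thesis unfolding rho[OF n] using T A Pnc[OF n] by (simp add: dd e1 e2)
  qed
  then obtain c where "T * (A * T') = c \<cdot>\<^sub>m 1\<^sub>m d" using schur[OF irr, of "T * (A * T')"] T A by (auto simp: dd)
  then have "T' * (T * (A * T')) * T = T' * (c \<cdot>\<^sub>m 1\<^sub>m d) * T" by simp
  moreover have "T' * (T * (A * T')) * T = A" using T A by (simp add: dd one_ext[OF T(2) T(1) T(4)])
  moreover have "T' * (c \<cdot>\<^sub>m 1\<^sub>m d) * T = c \<cdot>\<^sub>m 1\<^sub>m d" using T
    by (simp add: dd)
  ultimately show ?thesis by auto
qed

end

lemma one_smult_mat': "(1::complex) \<cdot>\<^sub>m A = A" by (intro eq_matI) auto

context setting begin

lemma theta_Qab: "n \<in> N \<Longrightarrow> \<theta> n \<in> Qab"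
  using Ptr[of n] trace_Qab[OF Pc Pq] N_sub_S by metis

lemma P_inv_prod: assumes y: "y \<in> S" shows "P y * P (inv\<^bsub>G\<^esub> y) = \<alpha> y (inv\<^bsub>G\<^esub> y) \<cdot>\<^sub>m 1\<^sub>m d"
  using Pmult[OF y S_inv[OF y]] Sc[OF y] P1 by simp

definition Pi :: "'a \<Rightarrow> complex mat" where
  "Pi y = (1 / \<alpha> y (inv\<^bsub>G\<^esub> y)) \<cdot>\<^sub>m P (inv\<^bsub>G\<^esub> y)"

lemma Pi_c: "y \<in> S \<Longrightarrow> Pi y \<in> carrier_mat d d"
  unfolding Pi_def using Pc S_inv by simp

lemma Pi_r: assumes y: "y \<in> S" shows "P y * Pi y = 1\<^sub>m d"
proof -
  have "P y * Pi y = (1 / \<alpha> y (inv\<^bsub>G\<^esub> y)) \<cdot>\<^sub>m (P y * P (inv\<^bsub>G\<^esub> y))"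
    unfolding Pi_def using Pc[OF y] Pc[OF S_inv[OF y]] by (simp add: dd)
  also have "\<dots> = 1\<^sub>m d" using P_inv_prod[OF y] \<alpha>nz[OF y S_inv[OF y]] by (simp add: smult_smult_mat' one_smult_mat')
  finally show ?thesis .
qed

lemma Pi_l: "y \<in> S \<Longrightarrow> Pi y * P y = 1\<^sub>m d"
  using mat_mult_left_right_inverse[OF Pc Pi_c Pi_r] by blast

lemma alpha_Qab: assumes x: "x \<in> S" and y: "y \<in> S" shows "\<alpha> x y \<in> Qab"
proof -
  have xy: "x \<otimes>\<^bsub>G\<^esub> y \<in> S" using S_mult x y by blast
  obtain i j where ij: "i < d" "j < d" "P (x \<otimes>\<^bsub>G\<^esub> y) $$ (i,j) \<noteq> 0"
    using nonzero_entry[OF Pc[OF xy] Pi_c[OF xy] Pi_r[OF xy] dpos] by blast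
  have e1: "(P x * P y) $$ (i,j) = \<alpha> x y * P (x \<otimes>\<^bsub>G\<^esub> y) $$ (i,j)"
    using Pmult[OF x y] ij Pc[OF xy] by simp
  have q1: "(P x * P y) $$ (i,j) \<in> Qab" using qmat_mult[OF Pc[OF x] Pc[OF y] Pq[OF x] Pq[OF y]] ij Pc[OF x] Pc[OF y]
    unfolding qmat_def by simp
  have q2: "P (x \<otimes>\<^bsub>G\<^esub> y) $$ (i,j) \<in> Qab" using Pq[OF xy] ij Pc[OF xy] unfolding qmat_def by simp
  have "\<alpha> x y = (\<alpha> x y * P (x \<otimes>\<^bsub>G\<^esub> y) $$ (i,j)) / P (x \<otimes>\<^bsub>G\<^esub> y) $$ (i,j)" using ij(3) by simp
  also have "\<dots> = (P x * P y) $$ (i,j) / P (x \<otimes>\<^bsub>G\<^esub> y) $$ (i,j)" using e1 by simp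
  finally show ?thesis using q1 q2 Qab_divide by metis
qed

lemma Pi_q: "y \<in> S \<Longrightarrow> qmat (Pi y)"
  unfolding Pi_def using alpha_Qab S_inv Pq by (intro qmat_smult) auto

definition nz :: "'a \<Rightarrow> bool" where
  "nz x \<longleftrightarrow> x \<in> carrier G \<and> (\<forall>y\<in>S. x \<otimes>\<^bsub>G\<^esub> y \<otimes>\<^bsub>G\<^esub> inv\<^bsub>G\<^esub> x \<in> S)"

abbreviation cj :: "'a \<Rightarrow> (complex \<Rightarrow> complex) \<Rightarrow> 'a \<Rightarrow> complex mat" where
  "cj x \<sigma> y \<equiv> conj_proj G P x \<sigma> y"

lemma cj_c: "nz x \<Longrightarrow> y \<in> S \<Longrightarrow> cj x \<sigma> y \<in> carrier_mat d d"
  unfolding conj_proj_def nz_def using Pc by simp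

lemma cj_q: "qhom \<sigma> \<Longrightarrow> nz x \<Longrightarrow> y \<in> S \<Longrightarrow> qmat (cj x \<sigma> y)"
  unfolding conj_proj_def nz_def using Pq qmat_map by simp

lemma cj_one: "qhom \<sigma> \<Longrightarrow> nz x \<Longrightarrow> cj x \<sigma> \<one>\<^bsub>G\<^esub> = 1\<^sub>m d"
  unfolding conj_proj_def nz_def using P1 map_mat_one by simp

lemma cj_mult1: assumes q: "qhom \<sigma>" and x: "nz x" and n: "n \<in> N" and y: "y \<in> S"
  shows "cj x \<sigma> (n \<otimes>\<^bsub>G\<^esub> y) = cj x \<sigma> n * cj x \<sigma> y"
proof -
  have xc: "x \<in> carrier G" using x nz_def by blast
  have e: "x \<otimes>\<^bsub>G\<^esub> (n \<otimes>\<^bsub>G\<^esub> y) \<otimes>\<^bsub>G\<^esub> inv\<^bsub>G\<^esub> x = (x \<otimes>\<^bsub>G\<^esub> n \<otimes>\<^bsub>G\<^esub> inv\<^bsub>G\<^esub> x) \<otimes>\<^bsub>G\<^esub> (x \<otimes>\<^bsub>G\<^esub> y \<otimes>\<^bsub>G\<^esub> inv\<^bsub>G\<^esub> x)"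
    using xc Nc'[OF n] Sc[OF y] by (simp add: G.m_assoc Gc2)
  have a: "x \<otimes>\<^bsub>G\<^esub> n \<otimes>\<^bsub>G\<^esub> inv\<^bsub>G\<^esub> x \<in> N" using conjN[OF xc n] .
  have b: "x \<otimes>\<^bsub>G\<^esub> y \<otimes>\<^bsub>G\<^esub> inv\<^bsub>G\<^esub> x \<in> S" using x y unfolding nz_def by blast
  have "cj x \<sigma> (n \<otimes>\<^bsub>G\<^esub> y) = map_mat \<sigma> (P (x \<otimes>\<^bsub>G\<^esub> n \<otimes>\<^bsub>G\<^esub> inv\<^bsub>G\<^esub> x) * P (x \<otimes>\<^bsub>G\<^esub> y \<otimes>\<^bsub>G\<^esub> inv\<^bsub>G\<^esub> x))"
    unfolding conj_proj_def e using Pleft[OF a b] by simp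
  also have "\<dots> = cj x \<sigma> n * cj x \<sigma> y"
    unfolding conj_proj_def using map_mat_mult[OF q Pc[OF N_sub_S[OF a]] Pc[OF b] Pq[OF N_sub_S[OF a]] Pq[OF b]] .
  finally show ?thesis .
qed

lemma cj_mult2: assumes q: "qhom \<sigma>" and x: "nz x" and n: "n \<in> N" and y: "y \<in> S"
  shows "cj x \<sigma> (y \<otimes>\<^bsub>G\<^esub> n) = cj x \<sigma> y * cj x \<sigma> n"
proof -
  have xc: "x \<in> carrier G" using x nz_def by blast
  have e: "x \<otimes>\<^bsub>G\<^esub> (y \<otimes>\<^bsub>G\<^esub> n) \<otimes>\<^bsub>G\<^esub> inv\<^bsub>G\<^esub> x = (x \<otimes>\<^bsub>G\<^esub> y \<otimes>\<^bsub>G\<^esub> inv\<^bsub>G\<^esub> x) \<otimes>\<^bsub>G\<^esub> (x \<otimes>\<^bsub>G\<^esub> n \<otimes>\<^bsub>G\<^esub> inv\<^bsub>G\<^esub> x)"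
    using xc Nc'[OF n] Sc[OF y] by (simp add: G.m_assoc Gc2)
  have a: "x \<otimes>\<^bsub>G\<^esub> n \<otimes>\<^bsub>G\<^esub> inv\<^bsub>G\<^esub> x \<in> N" using conjN[OF xc n] .
  have b: "x \<otimes>\<^bsub>G\<^esub> y \<otimes>\<^bsub>G\<^esub> inv\<^bsub>G\<^esub> x \<in> S" using x y unfolding nz_def by blast
  have "cj x \<sigma> (y \<otimes>\<^bsub>G\<^esub> n) = map_mat \<sigma> (P (x \<otimes>\<^bsub>G\<^esub> y \<otimes>\<^bsub>G\<^esub> inv\<^bsub>G\<^esub> x) * P (x \<otimes>\<^bsub>G\<^esub> n \<otimes>\<^bsub>G\<^esub> inv\<^bsub>G\<^esub> x))"
    unfolding conj_proj_def e using Pright[OF a b] by simp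
  also have "\<dots> = cj x \<sigma> y * cj x \<sigma> n"
    unfolding conj_proj_def using map_mat_mult[OF q Pc[OF b] Pc[OF N_sub_S[OF a]] Pq[OF b] Pq[OF N_sub_S[OF a]]] .
  finally show ?thesis .
qed

definition mu_spec :: "'a \<Rightarrow> (complex \<Rightarrow> complex) \<Rightarrow> ('a \<Rightarrow> complex) \<Rightarrow> bool" where
  "mu_spec x \<sigma> \<mu> \<longleftrightarrow>
     (\<forall>y. y \<notin> S \<longrightarrow> \<mu> y = undefined) \<and>
     (\<forall>y\<in>S. \<mu> y \<noteq> 0) \<and>
     (\<forall>y\<in>S. \<forall>n\<in>N. \<mu> (n \<otimes>\<^bsub>G\<^esub> y) = \<mu> y) \<and>
     \<mu> \<one>\<^bsub>G\<^esub> = 1 \<and>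
     (\<exists>L\<in>carrier_mat d d. \<exists>L'\<in>carrier_mat d d. L * L' = 1\<^sub>m d \<and> L' * L = 1\<^sub>m d \<and>
        (\<forall>y\<in>S. conj_proj G P x \<sigma> y = \<mu> y \<cdot>\<^sub>m (L' * P y * L)))"

lemma mu_the: "mu G N \<theta> d P x \<sigma> = (THE \<mu>. mu_spec x \<sigma> \<mu>)"
  unfolding mu_def mu_spec_def ..

end

context setting begin

lemmas ddd = mc_dd[where n=d] assoc_dd[where n=d] smult_l[where n=d] smult_r[where n=d]
  one_l[where n=d] one_r[where n=d] smult_smult_mat' smult_carrier_mat one_carrier_mat

lemma oe: "A \<in> carrier_mat d d \<Longrightarrow> B \<in> carrier_mat d d \<Longrightarrow>
  A * B = 1\<^sub>m d \<Longrightarrow> X \<in> carrier_mat d d \<Longrightarrow> A * (B * X) = (X :: complex mat)"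
  by (rule one_ext)

lemma spec_n1: assumes s: "mu_spec x \<sigma> \<mu>" and n: "n \<in> N" shows "\<mu> n = 1"
proof -
  have "\<mu> (n \<otimes>\<^bsub>G\<^esub> \<one>\<^bsub>G\<^esub>) = \<mu> \<one>\<^bsub>G\<^esub>" using s S_one n unfolding mu_spec_def by blast
  then show ?thesis using s Nc'[OF n] unfolding mu_spec_def by simp
qed

lemma spec_L: assumes s: "mu_spec x \<sigma> \<mu>"
  obtains L L' where "L \<in> carrier_mat d d" "L' \<in> carrier_mat d d" "L * L' = 1\<^sub>m d" "L' * L = 1\<^sub>m d"
    "\<And>y. y \<in> S \<Longrightarrow> cj x \<sigma> y = \<mu> y \<cdot>\<^sub>m (L' * (P y * L))"
proof -
  obtain L L' where L: "L \<in> carrier_mat d d" "L' \<in> carrier_mat d d" "L * L' = 1\<^sub>m d" "L' * L = 1\<^sub>m d"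
    "\<forall>y\<in>S. cj x \<sigma> y = \<mu> y \<cdot>\<^sub>m (L' * P y * L)" using s unfolding mu_spec_def by blast
  have "\<And>y. y \<in> S \<Longrightarrow> cj x \<sigma> y = \<mu> y \<cdot>\<^sub>m (L' * (P y * L))"
    using L Pc by (simp add: ddd)
  then show ?thesis using L that by blast
qed

lemma spec_unique: assumes s1: "mu_spec x \<sigma> \<mu>1" and s2: "mu_spec x \<sigma> \<mu>2" shows "\<mu>1 = \<mu>2"
proof -
  obtain L1 L1' where L1: "L1 \<in> carrier_mat d d" "L1' \<in> carrier_mat d d" "L1 * L1' = 1\<^sub>m d" "L1' * L1 = 1\<^sub>m d"
    and e1: "\<And>y. y \<in> S \<Longrightarrow> cj x \<sigma> y = \<mu>1 y \<cdot>\<^sub>m (L1' * (P y * L1))" using spec_L[OF s1] by blast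
  obtain L2 L2' where L2: "L2 \<in> carrier_mat d d" "L2' \<in> carrier_mat d d" "L2 * L2' = 1\<^sub>m d" "L2' * L2 = 1\<^sub>m d"
    and e2: "\<And>y. y \<in> S \<Longrightarrow> cj x \<sigma> y = \<mu>2 y \<cdot>\<^sub>m (L2' * (P y * L2))" using spec_L[OF s2] by blast
  have EN: "L1' * (P n * L1) = L2' * (P n * L2)" if n: "n \<in> N" for n
    using e1[OF N_sub_S[OF n]] e2[OF N_sub_S[OF n]] spec_n1[OF s1 n] spec_n1[OF s2 n] by (simp add: one_smult_mat')
  have comm: "\<forall>n\<in>N. (L1 * L2') * P n = P n * (L1 * L2')"
  proof
    fix n assume n: "n \<in> N"
    have Pn: "P n \<in> carrier_mat d d" using Pc[OF N_sub_S[OF n]] .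
    have "(L1 * L2') * P n = L1 * (L2' * (P n * (L2 * L2')))" using L1 L2 Pn by (simp add: ddd)
    also have "\<dots> = L1 * ((L2' * (P n * L2)) * L2')" using L1 L2 Pn by (simp add: ddd)
    also have "\<dots> = L1 * ((L1' * (P n * L1)) * L2')" using EN[OF n] by simp
    also have "\<dots> = P n * (L1 * L2')" using L1 L2 Pn by (simp add: ddd oe[OF L1(1) L1(2) L1(3)])
    finally show "(L1 * L2') * P n = P n * (L1 * L2')" .
  qed
  obtain c where C: "L1 * L2' = c \<cdot>\<^sub>m 1\<^sub>m d" using commutant[OF _ comm] L1 L2 by (auto simp: ddd)
  have "(L1 * L2') * (L2 * L1') = 1\<^sub>m d" using L1 L2 by (simp add: ddd oe[OF L2(2) L2(1) L2(4)])
  then have cinv: "c \<cdot>\<^sub>m (L2 * L1') = 1\<^sub>m d" unfolding C using L1 L2 by (simp add: ddd)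
  have c0: "c \<noteq> 0"
  proof
    assume "c = 0"
    then have "(c \<cdot>\<^sub>m (L2 * L1')) $$ (0,0) = 0" using L1 L2 dpos by simp
    moreover have "(1\<^sub>m d :: complex mat) $$ (0,0) = 1" using dpos by simp
    ultimately show False using cinv by simp
  qed
  have Cx: "L1 * (L2' * X) = c \<cdot>\<^sub>m X" if "X \<in> carrier_mat d d" for X
  proof -
    have "L1 * (L2' * X) = (L1 * L2') * X" using L1 L2 that by (simp add: ddd)
    also have "\<dots> = c \<cdot>\<^sub>m X" unfolding C using that by (simp add: ddd)
    finally show ?thesis .
  qed
  have "\<mu>1 y = \<mu>2 y" for y
  proof (cases "y \<in> S")
    case False
    then show ?thesis using s1 s2 unfolding mu_spec_def by simp
  next
    case y: True
    have Py: "P y \<in> carrier_mat d d" using Pc[OF y] .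
    have "L1 * (\<mu>1 y \<cdot>\<^sub>m (L1' * (P y * L1))) * L2' = L1 * (\<mu>2 y \<cdot>\<^sub>m (L2' * (P y * L2))) * L2'"
      using e1[OF y] e2[OF y] by simp
    moreover have "L1 * (\<mu>1 y \<cdot>\<^sub>m (L1' * (P y * L1))) * L2' = (\<mu>1 y * c) \<cdot>\<^sub>m P y"
      using L1 L2 Py by (simp add: ddd oe[OF L1(1) L1(2) L1(3)] C)
    moreover have "L1 * (\<mu>2 y \<cdot>\<^sub>m (L2' * (P y * L2))) * L2' = (\<mu>2 y * c) \<cdot>\<^sub>m P y"
      using L1 L2 Py by (simp add: ddd oe[OF L2(1) L2(2) L2(3)] Cx mult.commute)
    ultimately have "(\<mu>1 y * c) \<cdot>\<^sub>m P y = (\<mu>2 y * c) \<cdot>\<^sub>m P y" by simp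
    then have "\<mu>1 y * c = \<mu>2 y * c" using smult_cancel[OF Py Pi_c[OF y] Pi_r[OF y] dpos] by blast
    then show ?thesis using c0 by simp
  qed
  then show ?thesis by blast
qed

lemma mu_eq: "mu_spec x \<sigma> \<mu> \<Longrightarrow> mu G N \<theta> d P x \<sigma> = \<mu>"
  unfolding mu_the using spec_unique by (intro the_equality) auto

lemma mu_spec_mu: "mu_spec x \<sigma> \<mu> \<Longrightarrow> mu_spec x \<sigma> (mu G N \<theta> d P x \<sigma>)"
  using mu_eq by simp

lemma spec_intro:
  assumes q: "qhom \<sigma>" and x: "nz x"
    and L: "L \<in> carrier_mat d d" "L' \<in> carrier_mat d d" "L * L' = 1\<^sub>m d" "L' * L = 1\<^sub>m d"
    and c: "\<And>y. y \<in> S \<Longrightarrow> c y \<noteq> 0 \<and> cj x \<sigma> y = c y \<cdot>\<^sub>m (L' * (P y * L))"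
    and cN: "\<And>n. n \<in> N \<Longrightarrow> c n = 1"
  shows "mu_spec x \<sigma> (\<lambda>y. if y \<in> S then c y else undefined)"
  unfolding mu_spec_def
proof (intro conjI ballI allI impI)
  show "(if \<one>\<^bsub>G\<^esub> \<in> S then c \<one>\<^bsub>G\<^esub> else undefined) = 1" using S_one cN gN.N_one by simp
next
  fix y assume "y \<in> S" then show "(if y \<in> S then c y else undefined) \<noteq> 0" using c by simp
next
  fix y assume "y \<notin> S" then show "(if y \<in> S then c y else undefined) = undefined" by simp
next
  fix y n assume y: "y \<in> S" and n: "n \<in> N"
  have ny: "n \<otimes>\<^bsub>G\<^esub> y \<in> S" using S_mult[OF N_sub_S[OF n] y] .
  have Pn: "P n \<in> carrier_mat d d" using Pc[OF N_sub_S[OF n]] .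
  have Py: "P y \<in> carrier_mat d d" using Pc[OF y] .
  have "cj x \<sigma> (n \<otimes>\<^bsub>G\<^esub> y) = cj x \<sigma> n * cj x \<sigma> y" using cj_mult1[OF q x n y] .
  also have "\<dots> = (L' * (P n * L)) * (c y \<cdot>\<^sub>m (L' * (P y * L)))"
    using c[OF y] c[OF N_sub_S[OF n]] cN[OF n] by (simp add: one_smult_mat')
  also have "\<dots> = c y \<cdot>\<^sub>m (L' * ((P n * P y) * L))"
    using L Pn Py by (simp add: ddd oe[OF L(1) L(2) L(3)])
  also have "\<dots> = c y \<cdot>\<^sub>m (L' * (P (n \<otimes>\<^bsub>G\<^esub> y) * L))" using Pleft[OF n y] by simp
  finally have e: "c (n \<otimes>\<^bsub>G\<^esub> y) \<cdot>\<^sub>m (L' * (P (n \<otimes>\<^bsub>G\<^esub> y) * L)) = c y \<cdot>\<^sub>m (L' * (P (n \<otimes>\<^bsub>G\<^esub> y) * L))"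
    using c[OF ny] by simp
  have Pny: "P (n \<otimes>\<^bsub>G\<^esub> y) \<in> carrier_mat d d" using Pc[OF ny] .
  have inv: "(L' * (P (n \<otimes>\<^bsub>G\<^esub> y) * L)) * (L' * (Pi (n \<otimes>\<^bsub>G\<^esub> y) * L)) = 1\<^sub>m d"
    using L Pny Pi_c[OF ny] by (simp add: ddd oe[OF L(1) L(2) L(3)] oe[OF Pny Pi_c[OF ny] Pi_r[OF ny]])
  have "c (n \<otimes>\<^bsub>G\<^esub> y) = c y"
    using smult_cancel[OF _ _ inv dpos e] L Pny Pi_c[OF ny] by (simp add: ddd)
  then show "(if n \<otimes>\<^bsub>G\<^esub> y \<in> S then c (n \<otimes>\<^bsub>G\<^esub> y) else undefined) = (if y \<in> S then c y else undefined)"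
    using ny y by simp
next
  show "\<exists>L\<in>carrier_mat d d. \<exists>L'\<in>carrier_mat d d. L * L' = 1\<^sub>m d \<and> L' * L = 1\<^sub>m d \<and>
     (\<forall>y\<in>S. cj x \<sigma> y = (if y \<in> S then c y else undefined) \<cdot>\<^sub>m (L' * P y * L))"
    using L c Pc by (intro bexI[of _ L] bexI[of _ L']) (auto simp: ddd)
qed

end

context setting begin

lemma fix_nz:
  assumes q: "qhom \<sigma>" and xc: "x \<in> carrier G" and fx: "fixes_char G N \<theta> x \<sigma>"
  shows "nz x" "\<And>y. y \<in> S \<Longrightarrow> inv\<^bsub>G\<^esub> x \<otimes>\<^bsub>G\<^esub> y \<otimes>\<^bsub>G\<^esub> x \<in> S"
proof -
  have fx': "\<And>n. n \<in> N \<Longrightarrow> \<sigma> (\<theta> (x \<otimes>\<^bsub>G\<^esub> n \<otimes>\<^bsub>G\<^esub> inv\<^bsub>G\<^esub> x)) = \<theta> n"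
    using fx unfolding fixes_char_def by blast
  have ix: "inv\<^bsub>G\<^esub> x \<in> carrier G" using xc by simp
  have "x \<otimes>\<^bsub>G\<^esub> y \<otimes>\<^bsub>G\<^esub> inv\<^bsub>G\<^esub> x \<in> S" if y: "y \<in> S" for y
  proof -
    let ?z = "x \<otimes>\<^bsub>G\<^esub> y \<otimes>\<^bsub>G\<^esub> inv\<^bsub>G\<^esub> x"
    have yc: "y \<in> carrier G" using Sc[OF y] .
    have zc: "?z \<in> carrier G" using xc yc by simp
    have "\<theta> (?z \<otimes>\<^bsub>G\<^esub> m \<otimes>\<^bsub>G\<^esub> inv\<^bsub>G\<^esub> ?z) = \<theta> m" if m: "m \<in> N" for m
    proof -
      let ?n = "inv\<^bsub>G\<^esub> x \<otimes>\<^bsub>G\<^esub> m \<otimes>\<^bsub>G\<^esub> inv\<^bsub>G\<^esub> (inv\<^bsub>G\<^esub> x)"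
      have n: "?n \<in> N" using conjN[OF ix m] .
      have mc: "m \<in> carrier G" using Nc'[OF m] .
      have ynN: "y \<otimes>\<^bsub>G\<^esub> ?n \<otimes>\<^bsub>G\<^esub> inv\<^bsub>G\<^esub> y \<in> N" using conjN[OF yc n] .
      have e1: "?z \<otimes>\<^bsub>G\<^esub> m \<otimes>\<^bsub>G\<^esub> inv\<^bsub>G\<^esub> ?z = x \<otimes>\<^bsub>G\<^esub> (y \<otimes>\<^bsub>G\<^esub> ?n \<otimes>\<^bsub>G\<^esub> inv\<^bsub>G\<^esub> y) \<otimes>\<^bsub>G\<^esub> inv\<^bsub>G\<^esub> x"
        using xc yc mc by (simp add: G.m_assoc G.inv_mult_group Gc1 Gc2)
      have e2: "x \<otimes>\<^bsub>G\<^esub> ?n \<otimes>\<^bsub>G\<^esub> inv\<^bsub>G\<^esub> x = m"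
        using xc mc by (simp add: G.m_assoc Gc1 Gc2)
      have "\<sigma> (\<theta> (?z \<otimes>\<^bsub>G\<^esub> m \<otimes>\<^bsub>G\<^esub> inv\<^bsub>G\<^esub> ?z)) = \<theta> (y \<otimes>\<^bsub>G\<^esub> ?n \<otimes>\<^bsub>G\<^esub> inv\<^bsub>G\<^esub> y)"
        unfolding e1 using fx'[OF ynN] .
      also have "\<dots> = \<theta> ?n" using y n unfolding stab_iff by blast
      also have "\<dots> = \<sigma> (\<theta> m)" using fx'[OF n] unfolding e2 by simp
      finally have "\<sigma> (\<theta> (?z \<otimes>\<^bsub>G\<^esub> m \<otimes>\<^bsub>G\<^esub> inv\<^bsub>G\<^esub> ?z)) = \<sigma> (\<theta> m)" .
      moreover have "?z \<otimes>\<^bsub>G\<^esub> m \<otimes>\<^bsub>G\<^esub> inv\<^bsub>G\<^esub> ?z \<in> N" using conjN[OF zc m] .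
      ultimately show ?thesis using qh_inj[OF q] theta_Qab m by blast
    qed
    then show ?thesis unfolding stab_iff using zc by blast
  qed
  then show "nz x" unfolding nz_def using xc by blast
  fix y assume y: "y \<in> S"
  let ?w = "inv\<^bsub>G\<^esub> x \<otimes>\<^bsub>G\<^esub> y \<otimes>\<^bsub>G\<^esub> x"
  have yc: "y \<in> carrier G" using Sc[OF y] .
  have wc: "?w \<in> carrier G" using xc yc by simp
  have "\<theta> (?w \<otimes>\<^bsub>G\<^esub> m \<otimes>\<^bsub>G\<^esub> inv\<^bsub>G\<^esub> ?w) = \<theta> m" if m: "m \<in> N" for m
  proof -
    have mc: "m \<in> carrier G" using Nc'[OF m] .
    have wm: "?w \<otimes>\<^bsub>G\<^esub> m \<otimes>\<^bsub>G\<^esub> inv\<^bsub>G\<^esub> ?w \<in> N" using conjN[OF wc m] .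
    have xm: "x \<otimes>\<^bsub>G\<^esub> m \<otimes>\<^bsub>G\<^esub> inv\<^bsub>G\<^esub> x \<in> N" using conjN[OF xc m] .
    have e: "x \<otimes>\<^bsub>G\<^esub> (?w \<otimes>\<^bsub>G\<^esub> m \<otimes>\<^bsub>G\<^esub> inv\<^bsub>G\<^esub> ?w) \<otimes>\<^bsub>G\<^esub> inv\<^bsub>G\<^esub> x
        = y \<otimes>\<^bsub>G\<^esub> (x \<otimes>\<^bsub>G\<^esub> m \<otimes>\<^bsub>G\<^esub> inv\<^bsub>G\<^esub> x) \<otimes>\<^bsub>G\<^esub> inv\<^bsub>G\<^esub> y"
      using xc yc mc by (simp add: G.m_assoc G.inv_mult_group Gc1 Gc2)
    have "\<theta> (?w \<otimes>\<^bsub>G\<^esub> m \<otimes>\<^bsub>G\<^esub> inv\<^bsub>G\<^esub> ?w) = \<sigma> (\<theta> (x \<otimes>\<^bsub>G\<^esub> (?w \<otimes>\<^bsub>G\<^esub> m \<otimes>\<^bsub>G\<^esub> inv\<^bsub>G\<^esub> ?w) \<otimes>\<^bsub>G\<^esub> inv\<^bsub>G\<^esub> x))"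
      using fx'[OF wm] by simp
    also have "\<dots> = \<sigma> (\<theta> (y \<otimes>\<^bsub>G\<^esub> (x \<otimes>\<^bsub>G\<^esub> m \<otimes>\<^bsub>G\<^esub> inv\<^bsub>G\<^esub> x) \<otimes>\<^bsub>G\<^esub> inv\<^bsub>G\<^esub> y))" unfolding e ..
    also have "\<dots> = \<sigma> (\<theta> (x \<otimes>\<^bsub>G\<^esub> m \<otimes>\<^bsub>G\<^esub> inv\<^bsub>G\<^esub> x))" using y xm unfolding stab_iff by metis
    also have "\<dots> = \<theta> m" using fx'[OF m] .
    finally show ?thesis .
  qed
  then show "?w \<in> S" unfolding stab_iff using wc by blast
qed

end

context setting begin

lemma exists_spec:
  assumes q: "qhom \<sigma>" and xc: "x \<in> carrier G" and fx: "fixes_char G N \<theta> x \<sigma>"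
  shows "\<exists>\<mu>. mu_spec x \<sigma> \<mu>"
proof -
  have x: "nz x" using fix_nz[OF q xc fx] by blast
  have fx': "\<And>n. n \<in> N \<Longrightarrow> \<sigma> (\<theta> (x \<otimes>\<^bsub>G\<^esub> n \<otimes>\<^bsub>G\<^esub> inv\<^bsub>G\<^esub> x)) = \<theta> n"
    using fx unfolding fixes_char_def by blast
  have cjc: "\<And>y. y \<in> S \<Longrightarrow> cj x \<sigma> y \<in> carrier_mat d d" using cj_c[OF x] .
  have trep: "is_rep G N d (cj x \<sigma>)"
    unfolding is_rep_def using cjc N_sub_S cj_one[OF q x] cj_mult1[OF q x] by blast
  obtain d0 \<rho> where irr: "irr_rep G N d0 \<rho>" and tr: "\<forall>n\<in>N. \<theta> n = mat_trace (\<rho> n)"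
    using irrc unfolding irr_char_def by blast
  have trt: "\<forall>n\<in>N. mat_trace (cj x \<sigma> n) = mat_trace (\<rho> n)"
  proof
    fix n assume n: "n \<in> N"
    have a: "x \<otimes>\<^bsub>G\<^esub> n \<otimes>\<^bsub>G\<^esub> inv\<^bsub>G\<^esub> x \<in> N" using conjN[OF xc n] .
    have "mat_trace (cj x \<sigma> n) = \<sigma> (mat_trace (P (x \<otimes>\<^bsub>G\<^esub> n \<otimes>\<^bsub>G\<^esub> inv\<^bsub>G\<^esub> x)))"
      unfolding conj_proj_def using trace_map[OF q Pc[OF N_sub_S[OF a]] Pq[OF N_sub_S[OF a]]] .
    also have "\<dots> = \<theta> n" using Ptr[OF a] fx'[OF n] by simp
    finally show "mat_trace (cj x \<sigma> n) = mat_trace (\<rho> n)" using tr n by simp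
  qed
  have PT: "\<forall>n\<in>N. mat_trace (P n) = mat_trace (\<rho> n)" using tr Ptr by simp
  from gN.similar_irr[OF irr trep trt] obtain T2 T2' where dd0: "d = d0" and
    T2: "T2 \<in> carrier_mat d d" "T2' \<in> carrier_mat d d" "T2 * T2' = 1\<^sub>m d" "T2' * T2 = 1\<^sub>m d"
    and i2: "\<forall>n\<in>N. \<rho> n * T2 = T2 * cj x \<sigma> n" by blast
  from gN.similar_irr[OF irr Prep PT] dd0 obtain T T' where
    T: "T \<in> carrier_mat d d" "T' \<in> carrier_mat d d" "T * T' = 1\<^sub>m d" "T' * T = 1\<^sub>m d"
    and i1: "\<forall>n\<in>N. \<rho> n * T = T * P n" by blast
  have rc: "\<And>n. n \<in> N \<Longrightarrow> \<rho> n \<in> carrier_mat d d"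
    using dd0 irr gN.rep_carrier unfolding irr_rep_def by simp
  define L' where "L' = T2' * T"
  define L where "L = T' * T2"
  have Lc: "L \<in> carrier_mat d d" "L' \<in> carrier_mat d d" unfolding L_def L'_def using T T2 by auto
  have LL: "L * L' = 1\<^sub>m d" unfolding L_def L'_def using T T2 by (simp add: ddd oe[OF T2(1) T2(2) T2(3)])
  have LL': "L' * L = 1\<^sub>m d" unfolding L_def L'_def using T T2 by (simp add: ddd oe[OF T(1) T(2) T(3)])
  have tau: "cj x \<sigma> n = L' * (P n * L)" if n: "n \<in> N" for n
  proof -
    have Pn: "P n \<in> carrier_mat d d" using Pc[OF N_sub_S[OF n]] .
    have "cj x \<sigma> n = T2' * (T2 * cj x \<sigma> n)" using cjc[OF N_sub_S[OF n]] T2 by (simp add: oe[OF T2(2) T2(1) T2(4)])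
    also have "\<dots> = T2' * (\<rho> n * T2)" using i2 n by simp
    also have "\<dots> = T2' * ((\<rho> n * T) * (T' * T2))" using T T2 rc[OF n] by (simp add: ddd oe[OF T(1) T(2) T(3)])
    also have "\<dots> = T2' * ((T * P n) * (T' * T2))" using i1 n by simp
    also have "\<dots> = L' * (P n * L)" unfolding L_def L'_def using T T2 Pn by (simp add: ddd)
    finally show ?thesis .
  qed
  have Qn: "L * (cj x \<sigma> n * L') = P n" if n: "n \<in> N" for n
    using tau[OF n] Lc Pc[OF N_sub_S[OF n]] by (simp add: ddd oe[OF Lc(1) Lc(2) LL] LL)
  define Q where "Q y = L * (cj x \<sigma> y * L')" for y
  have Qc: "y \<in> S \<Longrightarrow> Q y \<in> carrier_mat d d" for y unfolding Q_def using Lc cjc by (simp add: ddd)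
  have comm: "\<forall>n\<in>N. (Pi y * Q y) * P n = P n * (Pi y * Q y)" if y: "y \<in> S" for y
  proof
    fix n assume n: "n \<in> N"
    have yc: "y \<in> carrier G" using Sc[OF y] .
    have nc: "n \<in> carrier G" using Nc'[OF n] .
    let ?m = "y \<otimes>\<^bsub>G\<^esub> n \<otimes>\<^bsub>G\<^esub> inv\<^bsub>G\<^esub> y"
    have m: "?m \<in> N" using conjN[OF yc n] .
    have e: "y \<otimes>\<^bsub>G\<^esub> n = ?m \<otimes>\<^bsub>G\<^esub> y" using yc nc by (simp add: G.m_assoc)
    have Pn: "P n \<in> carrier_mat d d" using Pc[OF N_sub_S[OF n]] .
    have Pm: "P ?m \<in> carrier_mat d d" using Pc[OF N_sub_S[OF m]] .
    have Py: "P y \<in> carrier_mat d d" using Pc[OF y] .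
    have cjy: "cj x \<sigma> y \<in> carrier_mat d d" using cjc[OF y] .
    have cjn: "cj x \<sigma> n \<in> carrier_mat d d" using cjc[OF N_sub_S[OF n]] .
    have cjm: "cj x \<sigma> ?m \<in> carrier_mat d d" using cjc[OF N_sub_S[OF m]] .
    have a: "cj x \<sigma> y * cj x \<sigma> n = cj x \<sigma> ?m * cj x \<sigma> y"
      using cj_mult2[OF q x n y] cj_mult1[OF q x m y] e by simp
    have b: "P y * P n = P ?m * P y" using Pright[OF n y] Pleft[OF m y] e by simp
    have Pm': "P ?m = P y * (P n * Pi y)"
    proof -
      have "P ?m = (P ?m * P y) * Pi y" using Pm Py Pi_c[OF y] by (simp add: ddd Pi_r[OF y])
      also have "\<dots> = P y * (P n * Pi y)" unfolding b[symmetric] using Pn Py Pi_c[OF y] by (simp add: ddd)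
      finally show ?thesis .
    qed
    have QP: "Q y * P n = P ?m * Q y"
    proof -
      have "Q y * P n = (L * (cj x \<sigma> y * L')) * (L * (cj x \<sigma> n * L'))" unfolding Q_def using Qn[OF n] by simp
      also have "\<dots> = L * ((cj x \<sigma> y * cj x \<sigma> n) * L')" using Lc cjy cjn by (simp add: ddd oe[OF Lc(2) Lc(1) LL'])
      also have "\<dots> = L * ((cj x \<sigma> ?m * cj x \<sigma> y) * L')" using a by simp
      also have "\<dots> = (L * (cj x \<sigma> ?m * L')) * (L * (cj x \<sigma> y * L'))" using Lc cjy cjm by (simp add: ddd oe[OF Lc(2) Lc(1) LL'])
      also have "\<dots> = P ?m * Q y" unfolding Q_def using Qn[OF m] by simp
      finally show ?thesis .
    qed
    have "(Pi y * Q y) * P n = Pi y * (P ?m * Q y)" using QP Pi_c[OF y] Qc[OF y] Pn by (simp add: ddd)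
    also have "\<dots> = P n * (Pi y * Q y)" unfolding Pm' using Pi_c[OF y] Qc[OF y] Pn Py
      by (simp add: ddd oe[OF Pi_c[OF y] Py Pi_l[OF y]])
    finally show "(Pi y * Q y) * P n = P n * (Pi y * Q y)" .
  qed
  define c where "c y = (SOME c. Pi y * Q y = c \<cdot>\<^sub>m 1\<^sub>m d)" for y
  have cC: "Pi y * Q y = c y \<cdot>\<^sub>m 1\<^sub>m d" if y: "y \<in> S" for y
  proof -
    have "\<exists>c. Pi y * Q y = c \<cdot>\<^sub>m 1\<^sub>m d" using commutant[OF _ comm[OF y]] Pi_c[OF y] Qc[OF y] by (simp add: ddd)
    then show ?thesis unfolding c_def by (rule someI_ex)
  qed
  have cjf: "cj x \<sigma> y = c y \<cdot>\<^sub>m (L' * (P y * L))" if y: "y \<in> S" for y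
  proof -
    have Py: "P y \<in> carrier_mat d d" using Pc[OF y] .
    have "cj x \<sigma> y = L' * (Q y * L)" unfolding Q_def using Lc cjc[OF y]
      by (simp add: ddd oe[OF Lc(2) Lc(1) LL'] LL')
    also have "Q y = P y * (Pi y * Q y)" using Py Pi_c[OF y] Qc[OF y] by (simp add: oe[OF Py Pi_c[OF y] Pi_r[OF y]])
    also have "\<dots> = c y \<cdot>\<^sub>m P y" using cC[OF y] Py by (simp add: ddd)
    finally show ?thesis using Lc Py by (simp add: ddd)
  qed
  have cnz: "c y \<noteq> 0" if y: "y \<in> S" for y
  proof
    assume c0: "c y = 0"
    have b: "x \<otimes>\<^bsub>G\<^esub> y \<otimes>\<^bsub>G\<^esub> inv\<^bsub>G\<^esub> x \<in> S" using x y unfolding nz_def by blast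
    obtain i j where ij: "i < d" "j < d" "P (x \<otimes>\<^bsub>G\<^esub> y \<otimes>\<^bsub>G\<^esub> inv\<^bsub>G\<^esub> x) $$ (i,j) \<noteq> 0"
      using nonzero_entry[OF Pc[OF b] Pi_c[OF b] Pi_r[OF b] dpos] by blast
    have "P (x \<otimes>\<^bsub>G\<^esub> y \<otimes>\<^bsub>G\<^esub> inv\<^bsub>G\<^esub> x) $$ (i,j) \<in> Qab" using Pq[OF b] Pc[OF b] ij unfolding qmat_def by simp
    then have "cj x \<sigma> y $$ (i,j) \<noteq> 0" unfolding conj_proj_def using ij Pc[OF b] qh_nz[OF q] by simp
    moreover have "cj x \<sigma> y $$ (i,j) = 0" using cjf[OF y] c0 ij Lc Pc[OF y] by (simp add: ddd)
    ultimately show False by simp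
  qed
  have cN: "c n = 1" if n: "n \<in> N" for n
  proof -
    have ny: "n \<in> S" using N_sub_S[OF n] .
    have e: "c n \<cdot>\<^sub>m (L' * (P n * L)) = 1 \<cdot>\<^sub>m (L' * (P n * L))" using cjf[OF ny] tau[OF n] by (simp add: one_smult_mat')
    have inv: "(L' * (P n * L)) * (L' * (Pi n * L)) = 1\<^sub>m d"
      using Lc Pc[OF ny] Pi_c[OF ny] by (simp add: ddd oe[OF Lc(1) Lc(2) LL] oe[OF Pc[OF ny] Pi_c[OF ny] Pi_r[OF ny]] LL')
    show ?thesis using smult_cancel[OF _ _ inv dpos e] Lc Pc[OF ny] Pi_c[OF ny] by (simp add: ddd)
  qed
  have "mu_spec x \<sigma> (\<lambda>y. if y \<in> S then c y else undefined)"
    by (rule spec_intro[OF q x Lc(1) Lc(2) LL LL']) (use cnz cjf cN in auto)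
  then show ?thesis by blast
qed

end

context setting begin

definition fa :: "'a \<Rightarrow> 'a \<Rightarrow> complex" where
  "fa g y = (if y \<in> S then \<alpha> g (inv\<^bsub>G\<^esub> g) / (\<alpha> g (y \<otimes>\<^bsub>G\<^esub> inv\<^bsub>G\<^esub> g) * \<alpha> y (inv\<^bsub>G\<^esub> g)) else undefined)"

lemma nz_S: assumes g: "g \<in> S" shows "nz g"
  unfolding nz_def using Sc[OF g] S_mult[OF S_mult[OF g] S_inv[OF g]] by blast

lemma fa_Qab: assumes g: "g \<in> S" and y: "y \<in> S" shows "fa g y \<in> Qab - {0}"
proof -
  have ig: "inv\<^bsub>G\<^esub> g \<in> S" using S_inv[OF g] .
  have yig: "y \<otimes>\<^bsub>G\<^esub> inv\<^bsub>G\<^esub> g \<in> S" using S_mult[OF y ig] .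
  show ?thesis unfolding fa_def using y alpha_Qab[OF g ig] alpha_Qab[OF g yig] alpha_Qab[OF y ig]
    \<alpha>nz[OF g ig] \<alpha>nz[OF g yig] \<alpha>nz[OF y ig] by simp
qed

lemma partA_eq:
  assumes g: "g \<in> S" and M: "M' \<in> carrier_mat d d" "P g * M' = 1\<^sub>m d" "M' * P g = 1\<^sub>m d" and y: "y \<in> S"
  shows "cj g (\<lambda>z. z) y = fa g y \<cdot>\<^sub>m (P g * (P y * M'))"
proof -
  have ig: "inv\<^bsub>G\<^esub> g \<in> S" using S_inv[OF g] .
  have yig: "y \<otimes>\<^bsub>G\<^esub> inv\<^bsub>G\<^esub> g \<in> S" using S_mult[OF y ig] .
  have gyg: "g \<otimes>\<^bsub>G\<^esub> (y \<otimes>\<^bsub>G\<^esub> inv\<^bsub>G\<^esub> g) \<in> S" using S_mult[OF g yig] .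
  have e: "g \<otimes>\<^bsub>G\<^esub> (y \<otimes>\<^bsub>G\<^esub> inv\<^bsub>G\<^esub> g) = g \<otimes>\<^bsub>G\<^esub> y \<otimes>\<^bsub>G\<^esub> inv\<^bsub>G\<^esub> g"
    using Sc[OF g] Sc[OF y] by (simp add: G.m_assoc)
  have Pg: "P g \<in> carrier_mat d d" and Py: "P y \<in> carrier_mat d d" and Pig: "P (inv\<^bsub>G\<^esub> g) \<in> carrier_mat d d"
    and Pyig: "P (y \<otimes>\<^bsub>G\<^esub> inv\<^bsub>G\<^esub> g) \<in> carrier_mat d d" and Pgyg: "P (g \<otimes>\<^bsub>G\<^esub> (y \<otimes>\<^bsub>G\<^esub> inv\<^bsub>G\<^esub> g)) \<in> carrier_mat d d"
    using Pc g y ig yig gyg by auto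
  have Pinvg: "P (inv\<^bsub>G\<^esub> g) = \<alpha> g (inv\<^bsub>G\<^esub> g) \<cdot>\<^sub>m M'"
  proof -
    have "P (inv\<^bsub>G\<^esub> g) = M' * (P g * P (inv\<^bsub>G\<^esub> g))" using M Pg Pig by (simp add: oe)
    also have "\<dots> = \<alpha> g (inv\<^bsub>G\<^esub> g) \<cdot>\<^sub>m M'" using P_inv_prod[OF g] M by (simp add: ddd)
    finally show ?thesis .
  qed
  define A where "A = \<alpha> y (inv\<^bsub>G\<^esub> g) * \<alpha> g (y \<otimes>\<^bsub>G\<^esub> inv\<^bsub>G\<^esub> g)"
  have A0: "A \<noteq> 0" unfolding A_def using \<alpha>nz[OF y ig] \<alpha>nz[OF g yig] by simp
  have "P g * (P y * P (inv\<^bsub>G\<^esub> g)) = A \<cdot>\<^sub>m P (g \<otimes>\<^bsub>G\<^esub> (y \<otimes>\<^bsub>G\<^esub> inv\<^bsub>G\<^esub> g))"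
    unfolding A_def using Pmult[OF y ig] Pmult[OF g yig] Pg Pyig by (simp add: ddd)
  moreover have "P g * (P y * P (inv\<^bsub>G\<^esub> g)) = \<alpha> g (inv\<^bsub>G\<^esub> g) \<cdot>\<^sub>m (P g * (P y * M'))"
    unfolding Pinvg using Pg Py M by (simp add: ddd)
  ultimately have "A \<cdot>\<^sub>m P (g \<otimes>\<^bsub>G\<^esub> (y \<otimes>\<^bsub>G\<^esub> inv\<^bsub>G\<^esub> g)) = \<alpha> g (inv\<^bsub>G\<^esub> g) \<cdot>\<^sub>m (P g * (P y * M'))" by simp
  then have "(1 / A) \<cdot>\<^sub>m (A \<cdot>\<^sub>m P (g \<otimes>\<^bsub>G\<^esub> (y \<otimes>\<^bsub>G\<^esub> inv\<^bsub>G\<^esub> g))) = (1 / A) \<cdot>\<^sub>m (\<alpha> g (inv\<^bsub>G\<^esub> g) \<cdot>\<^sub>m (P g * (P y * M')))"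
    by simp
  then have "P (g \<otimes>\<^bsub>G\<^esub> (y \<otimes>\<^bsub>G\<^esub> inv\<^bsub>G\<^esub> g)) = (\<alpha> g (inv\<^bsub>G\<^esub> g) / A) \<cdot>\<^sub>m (P g * (P y * M'))"
    using A0 by (simp add: smult_smult_mat' one_smult_mat')
  then show ?thesis unfolding conj_proj_def fa_def A_def e[symmetric] map_mat_id using y
    by (simp add: mult.commute)
qed

lemma partA_N:
  assumes g: "g \<in> S" and M: "M' \<in> carrier_mat d d" "P g * M' = 1\<^sub>m d" "M' * P g = 1\<^sub>m d" and n: "n \<in> N"
  shows "fa g n = 1"
proof -
  have gc: "g \<in> carrier G" using Sc[OF g] .
  have nS: "n \<in> S" using N_sub_S[OF n] .
  let ?m = "g \<otimes>\<^bsub>G\<^esub> n \<otimes>\<^bsub>G\<^esub> inv\<^bsub>G\<^esub> g"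
  have m: "?m \<in> N" using conjN[OF gc n] .
  have Pg: "P g \<in> carrier_mat d d" and Pn: "P n \<in> carrier_mat d d" and Pm: "P ?m \<in> carrier_mat d d"
    using Pc g nS N_sub_S[OF m] by auto
  have "P ?m * P g = P (?m \<otimes>\<^bsub>G\<^esub> g)" using Pleft[OF m g] by simp
  also have "?m \<otimes>\<^bsub>G\<^esub> g = g \<otimes>\<^bsub>G\<^esub> n" using gc Nc'[OF n] by (simp add: G.m_assoc)
  also have "P (g \<otimes>\<^bsub>G\<^esub> n) = P g * P n" using Pright[OF n g] .
  finally have e: "P ?m * P g = P g * P n" .
  have "P ?m = (P ?m * P g) * M'" using Pm Pg M by (simp add: ddd)
  also have "\<dots> = P g * (P n * M')" unfolding e using Pg Pn M by (simp add: ddd)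
  finally have "P ?m = P g * (P n * M')" .
  moreover have "P ?m = fa g n \<cdot>\<^sub>m (P g * (P n * M'))"
    using partA_eq[OF g M nS] unfolding conj_proj_def map_mat_id .
  ultimately have e2: "fa g n \<cdot>\<^sub>m (P g * (P n * M')) = 1 \<cdot>\<^sub>m (P g * (P n * M'))" by (simp add: one_smult_mat')
  have inv: "(P g * (P n * M')) * (P g * (Pi n * M')) = 1\<^sub>m d"
    using Pg Pn M Pi_c[OF nS] by (simp add: ddd oe[OF Pn Pi_c[OF nS] Pi_r[OF nS]] oe[OF M(1) Pg M(3)])
  show ?thesis using smult_cancel[OF _ _ inv dpos e2] Pg Pn M Pi_c[OF nS] by (simp add: ddd)
qed

lemma partA_spec:
  assumes g: "g \<in> S" and M: "M' \<in> carrier_mat d d" "P g * M' = 1\<^sub>m d" "M' * P g = 1\<^sub>m d"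
  shows "mu_spec g (\<lambda>z. z) (fa g)"
proof -
  have "mu_spec g (\<lambda>z. z) (\<lambda>y. if y \<in> S then fa g y else undefined)"
    by (rule spec_intro[OF qhom_id nz_S[OF g] M(1) Pc[OF g] M(3) M(2)])
      (use fa_Qab[OF g] partA_eq[OF g M] partA_N[OF g M] in auto)
  moreover have "(\<lambda>y. if y \<in> S then fa g y else undefined) = fa g" unfolding fa_def by auto
  ultimately show ?thesis by simp
qed

lemma mu_fa: assumes g: "g \<in> S" shows "mu G N \<theta> d P g (\<lambda>z. z) = fa g"
  using mu_eq[OF partA_spec[OF g Pi_c[OF g] Pi_r[OF g] Pi_l[OF g]]] .

end

context setting begin

lemma partB:
  assumes q: "qhom \<sigma>" and gc: "g \<in> carrier G" and fg: "fixes_char G N \<theta> g \<sigma>"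
    and t: "t \<in> S" and xc: "x \<in> carrier G" and gtx: "g = t \<otimes>\<^bsub>G\<^esub> x"
  shows "fixes_char G N \<theta> x \<sigma> \<and>
        {inv\<^bsub>G\<^esub> x \<otimes>\<^bsub>G\<^esub> y \<otimes>\<^bsub>G\<^esub> x | y. y \<in> S} = S \<and>
        (\<forall>y\<in>S. mu G N \<theta> d P g \<sigma> y
             = \<sigma> (mu G N \<theta> d P t (\<lambda>z. z) (x \<otimes>\<^bsub>G\<^esub> y \<otimes>\<^bsub>G\<^esub> inv\<^bsub>G\<^esub> x)) * mu G N \<theta> d P x \<sigma> y)"
proof -
  have tc: "t \<in> carrier G" using Sc[OF t] .
  have fg': "\<And>n. n \<in> N \<Longrightarrow> \<sigma> (\<theta> (g \<otimes>\<^bsub>G\<^esub> n \<otimes>\<^bsub>G\<^esub> inv\<^bsub>G\<^esub> g)) = \<theta> n"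
    using fg unfolding fixes_char_def by blast
  have fx: "fixes_char G N \<theta> x \<sigma>" unfolding fixes_char_def
  proof
    fix n assume n: "n \<in> N"
    let ?m = "x \<otimes>\<^bsub>G\<^esub> n \<otimes>\<^bsub>G\<^esub> inv\<^bsub>G\<^esub> x"
    have m: "?m \<in> N" using conjN[OF xc n] .
    have e: "g \<otimes>\<^bsub>G\<^esub> n \<otimes>\<^bsub>G\<^esub> inv\<^bsub>G\<^esub> g = t \<otimes>\<^bsub>G\<^esub> ?m \<otimes>\<^bsub>G\<^esub> inv\<^bsub>G\<^esub> t"
      unfolding gtx using tc xc Nc'[OF n] by (simp add: G.m_assoc G.inv_mult_group)
    have "\<theta> (t \<otimes>\<^bsub>G\<^esub> ?m \<otimes>\<^bsub>G\<^esub> inv\<^bsub>G\<^esub> t) = \<theta> ?m" using t m unfolding stab_iff by blast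
    then show "\<sigma> (\<theta> ?m) = \<theta> n" using fg'[OF n] unfolding e by simp
  qed
  have nzx: "nz x" and xin: "\<And>y. y \<in> S \<Longrightarrow> inv\<^bsub>G\<^esub> x \<otimes>\<^bsub>G\<^esub> y \<otimes>\<^bsub>G\<^esub> x \<in> S" using fix_nz[OF q xc fx] by auto
  have nzg: "nz g" using fix_nz[OF q gc fg] by auto
  have xS: "\<And>y. y \<in> S \<Longrightarrow> x \<otimes>\<^bsub>G\<^esub> y \<otimes>\<^bsub>G\<^esub> inv\<^bsub>G\<^esub> x \<in> S" using nzx unfolding nz_def by blast
  have seteq: "{inv\<^bsub>G\<^esub> x \<otimes>\<^bsub>G\<^esub> y \<otimes>\<^bsub>G\<^esub> x | y. y \<in> S} = S"
  proof
    show "{inv\<^bsub>G\<^esub> x \<otimes>\<^bsub>G\<^esub> y \<otimes>\<^bsub>G\<^esub> x | y. y \<in> S} \<subseteq> S" using xin by blast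
    show "S \<subseteq> {inv\<^bsub>G\<^esub> x \<otimes>\<^bsub>G\<^esub> y \<otimes>\<^bsub>G\<^esub> x | y. y \<in> S}"
    proof
      fix y assume y: "y \<in> S"
      have "y = inv\<^bsub>G\<^esub> x \<otimes>\<^bsub>G\<^esub> (x \<otimes>\<^bsub>G\<^esub> y \<otimes>\<^bsub>G\<^esub> inv\<^bsub>G\<^esub> x) \<otimes>\<^bsub>G\<^esub> x"
        using xc Sc[OF y] by (simp add: G.m_assoc Gc2)
      then show "y \<in> {inv\<^bsub>G\<^esub> x \<otimes>\<^bsub>G\<^esub> y \<otimes>\<^bsub>G\<^esub> x | y. y \<in> S}" using xS[OF y] by blast
    qed
  qed
  obtain \<mu>0 where "mu_spec x \<sigma> \<mu>0" using exists_spec[OF q xc fx] by blast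
  then have sx: "mu_spec x \<sigma> (mu G N \<theta> d P x \<sigma>)" by (rule mu_spec_mu)
  obtain Lx Lx' where Lx: "Lx \<in> carrier_mat d d" "Lx' \<in> carrier_mat d d" "Lx * Lx' = 1\<^sub>m d" "Lx' * Lx = 1\<^sub>m d"
    and ex: "\<And>y. y \<in> S \<Longrightarrow> cj x \<sigma> y = mu G N \<theta> d P x \<sigma> y \<cdot>\<^sub>m (Lx' * (P y * Lx))"
    using spec_L[OF sx] by blast
  define sP where "sP = map_mat \<sigma> (P t)"
  define sPi where "sPi = map_mat \<sigma> (Pi t)"
  have sc: "sP \<in> carrier_mat d d" "sPi \<in> carrier_mat d d" unfolding sP_def sPi_def using Pc[OF t] Pi_c[OF t] by auto
  have s1: "sP * sPi = 1\<^sub>m d" unfolding sP_def sPi_def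
    using map_mat_mult[OF q Pc[OF t] Pi_c[OF t] Pq[OF t] Pi_q[OF t]] Pi_r[OF t] map_mat_one[OF q] by simp
  have s2: "sPi * sP = 1\<^sub>m d" unfolding sP_def sPi_def
    using map_mat_mult[OF q Pi_c[OF t] Pc[OF t] Pi_q[OF t] Pq[OF t]] Pi_l[OF t] map_mat_one[OF q] by simp
  define L where "L = Lx * sPi"
  define L' where "L' = sP * Lx'"
  have Lc: "L \<in> carrier_mat d d" "L' \<in> carrier_mat d d" unfolding L_def L'_def using Lx sc by auto
  have LL: "L * L' = 1\<^sub>m d" unfolding L_def L'_def using Lx sc by (simp add: ddd oe[OF sc(2) sc(1) s2])
  have LL': "L' * L = 1\<^sub>m d" unfolding L_def L'_def using Lx sc by (simp add: ddd oe[OF Lx(2) Lx(1) Lx(4)] s1)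
  define c where "c y = \<sigma> (fa t (x \<otimes>\<^bsub>G\<^esub> y \<otimes>\<^bsub>G\<^esub> inv\<^bsub>G\<^esub> x)) * mu G N \<theta> d P x \<sigma> y" for y
  have cf: "c y \<noteq> 0 \<and> cj g \<sigma> y = c y \<cdot>\<^sub>m (L' * (P y * L))" if y: "y \<in> S" for y
  proof
    let ?z = "x \<otimes>\<^bsub>G\<^esub> y \<otimes>\<^bsub>G\<^esub> inv\<^bsub>G\<^esub> x"
    have z: "?z \<in> S" using xS[OF y] .
    have fz: "fa t ?z \<in> Qab" "fa t ?z \<noteq> 0" using fa_Qab[OF t z] by auto
    have "mu G N \<theta> d P x \<sigma> y \<noteq> 0" using sx y unfolding mu_spec_def by blast
    then show "c y \<noteq> 0" unfolding c_def using qh_nz[OF q fz] by simp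
    have e: "g \<otimes>\<^bsub>G\<^esub> y \<otimes>\<^bsub>G\<^esub> inv\<^bsub>G\<^esub> g = t \<otimes>\<^bsub>G\<^esub> ?z \<otimes>\<^bsub>G\<^esub> inv\<^bsub>G\<^esub> t"
      unfolding gtx using tc xc Sc[OF y] by (simp add: G.m_assoc G.inv_mult_group)
    have Pt: "P t \<in> carrier_mat d d" and Pz: "P ?z \<in> carrier_mat d d" and Pit: "Pi t \<in> carrier_mat d d"
      and Py: "P y \<in> carrier_mat d d" using Pc t z y Pi_c by auto
    have "P (t \<otimes>\<^bsub>G\<^esub> ?z \<otimes>\<^bsub>G\<^esub> inv\<^bsub>G\<^esub> t) = fa t ?z \<cdot>\<^sub>m (P t * (P ?z * Pi t))"
      using partA_eq[OF t Pi_c[OF t] Pi_r[OF t] Pi_l[OF t] z] unfolding conj_proj_def map_mat_id .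
    then have "cj g \<sigma> y = map_mat \<sigma> (fa t ?z \<cdot>\<^sub>m (P t * (P ?z * Pi t)))"
      unfolding conj_proj_def e by simp
    also have "\<dots> = \<sigma> (fa t ?z) \<cdot>\<^sub>m (sP * (map_mat \<sigma> (P ?z) * sPi))"
    proof -
      have q1: "qmat (P ?z * Pi t)" using Pz Pit Pq[OF z] Pi_q[OF t] by simp
      have q2: "qmat (P t * (P ?z * Pi t))" using qmat_mult[OF Pt mc_dd[OF Pz Pit] Pq[OF t] q1] .
      have "map_mat \<sigma> (fa t ?z \<cdot>\<^sub>m (P t * (P ?z * Pi t))) = \<sigma> (fa t ?z) \<cdot>\<^sub>m map_mat \<sigma> (P t * (P ?z * Pi t))"
        using map_mat_smult[OF q fz(1) q2] .
      also have "map_mat \<sigma> (P t * (P ?z * Pi t)) = map_mat \<sigma> (P t) * map_mat \<sigma> (P ?z * Pi t)"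
        using map_mat_mult[OF q Pt mc_dd[OF Pz Pit] Pq[OF t] q1] .
      also have "map_mat \<sigma> (P ?z * Pi t) = map_mat \<sigma> (P ?z) * map_mat \<sigma> (Pi t)"
        using map_mat_mult[OF q Pz Pit Pq[OF z] Pi_q[OF t]] .
      finally show ?thesis unfolding sP_def sPi_def .
    qed
    also have "map_mat \<sigma> (P ?z) = cj x \<sigma> y" unfolding conj_proj_def ..
    also have "\<dots> = mu G N \<theta> d P x \<sigma> y \<cdot>\<^sub>m (Lx' * (P y * Lx))" using ex[OF y] .
    also have "\<sigma> (fa t ?z) \<cdot>\<^sub>m (sP * ((mu G N \<theta> d P x \<sigma> y \<cdot>\<^sub>m (Lx' * (P y * Lx))) * sPi)) = c y \<cdot>\<^sub>m (L' * (P y * L))"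
      unfolding c_def L_def L'_def using sc Lx Py by (simp add: ddd)
    finally show "cj g \<sigma> y = c y \<cdot>\<^sub>m (L' * (P y * L))" .
  qed
  have cN: "c n = 1" if n: "n \<in> N" for n
  proof -
    have m: "x \<otimes>\<^bsub>G\<^esub> n \<otimes>\<^bsub>G\<^esub> inv\<^bsub>G\<^esub> x \<in> N" using conjN[OF xc n] .
    show ?thesis unfolding c_def using partA_N[OF t Pi_c[OF t] Pi_r[OF t] Pi_l[OF t] m] spec_n1[OF sx n] qh_1[OF q] by simp
  qed
  have "mu_spec g \<sigma> (\<lambda>y. if y \<in> S then c y else undefined)"
    by (rule spec_intro[OF q nzg Lc(1) Lc(2) LL LL']) (use cf cN in auto)
  then have mg: "mu G N \<theta> d P g \<sigma> = (\<lambda>y. if y \<in> S then c y else undefined)" by (rule mu_eq)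
  have "\<forall>y\<in>S. mu G N \<theta> d P g \<sigma> y
             = \<sigma> (mu G N \<theta> d P t (\<lambda>z. z) (x \<otimes>\<^bsub>G\<^esub> y \<otimes>\<^bsub>G\<^esub> inv\<^bsub>G\<^esub> x)) * mu G N \<theta> d P x \<sigma> y"
    unfolding mg mu_fa[OF t] c_def by simp
  then show ?thesis using fx seteq by blast
qed

end

theorem lemma1p7:
  fixes G :: "('a, 'b) monoid_scheme" and N :: "'a set" and \<theta> :: "'a \<Rightarrow> complex"
    and p d :: nat and P :: "'a \<Rightarrow> complex mat" and \<alpha> :: "'a \<Rightarrow> 'a \<Rightarrow> complex"
  assumes "prime p"
    and "group G" and "finite (carrier G)"
    and "H_triple p G N \<theta>"
    and "proj_rep G (stab G N \<theta>) d P \<alpha>"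
    and "associated G N \<theta> d P"
    and "\<forall>y\<in>stab G N \<theta>. \<forall>i<d. \<forall>j<d. P y $$ (i, j) \<in> Qab"
  shows
    "(\<forall>g\<in>stab G N \<theta>.
        (\<forall>y\<in>stab G N \<theta>.
           mu G N \<theta> d P g (\<lambda>z. z) y
             = \<alpha> g (inv\<^bsub>G\<^esub> g) / (\<alpha> g (y \<otimes>\<^bsub>G\<^esub> inv\<^bsub>G\<^esub> g) * \<alpha> y (inv\<^bsub>G\<^esub> g))) \<and>
        (\<forall>M'\<in>carrier_mat d d. P g * M' = 1\<^sub>m d \<and> M' * P g = 1\<^sub>m d \<longrightarrow>
           (\<forall>y\<in>stab G N \<theta>.
              conj_proj G P g (\<lambda>z. z) y = mu G N \<theta> d P g (\<lambda>z. z) y \<cdot>\<^sub>m (P g * P y * M'))) \<and>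
        (\<forall>y\<in>stab G N \<theta>. mu G N \<theta> d P g (\<lambda>z. z) y \<in> Qab - {0}))
     \<and>
     (\<forall>g \<sigma> t x. g \<in> carrier G \<and> \<sigma> \<in> HGal p \<and> fixes_char G N \<theta> g \<sigma> \<and>
        t \<in> stab G N \<theta> \<and> x \<in> carrier G \<and> g = t \<otimes>\<^bsub>G\<^esub> x \<longrightarrow>
        fixes_char G N \<theta> x \<sigma> \<and>
        {inv\<^bsub>G\<^esub> x \<otimes>\<^bsub>G\<^esub> y \<otimes>\<^bsub>G\<^esub> x | y. y \<in> stab G N \<theta>} = stab G N \<theta> \<and>
        (\<forall>y\<in>stab G N \<theta>.
           mu G N \<theta> d P g \<sigma> y
             = \<sigma> (mu G N \<theta> d P t (\<lambda>z. z) (x \<otimes>\<^bsub>G\<^esub> y \<otimes>\<^bsub>G\<^esub> inv\<^bsub>G\<^esub> x)) * mu G N \<theta> d P x \<sigma> y))"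
proof -
  have nrm: "N \<lhd> G" and irr: "irr_char G N \<theta>" using assms(4) unfolding H_triple_def by auto
  interpret s: setting G N \<theta> d P \<alpha>
    by (rule setting.intro) (use assms nrm irr in auto)
  have A: "\<forall>g\<in>stab G N \<theta>.
        (\<forall>y\<in>stab G N \<theta>.
           mu G N \<theta> d P g (\<lambda>z. z) y
             = \<alpha> g (inv\<^bsub>G\<^esub> g) / (\<alpha> g (y \<otimes>\<^bsub>G\<^esub> inv\<^bsub>G\<^esub> g) * \<alpha> y (inv\<^bsub>G\<^esub> g))) \<and>
        (\<forall>M'\<in>carrier_mat d d. P g * M' = 1\<^sub>m d \<and> M' * P g = 1\<^sub>m d \<longrightarrow>
           (\<forall>y\<in>stab G N \<theta>.
              conj_proj G P g (\<lambda>z. z) y = mu G N \<theta> d P g (\<lambda>z. z) y \<cdot>\<^sub>m (P g * P y * M'))) \<and>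
        (\<forall>y\<in>stab G N \<theta>. mu G N \<theta> d P g (\<lambda>z. z) y \<in> Qab - {0})"
  proof (intro ballI conjI impI)
    fix g y assume g: "g \<in> stab G N \<theta>" and y: "y \<in> stab G N \<theta>"
    show "mu G N \<theta> d P g (\<lambda>z. z) y = \<alpha> g (inv\<^bsub>G\<^esub> g) / (\<alpha> g (y \<otimes>\<^bsub>G\<^esub> inv\<^bsub>G\<^esub> g) * \<alpha> y (inv\<^bsub>G\<^esub> g))"
      unfolding s.mu_fa[OF g] s.fa_def using y by simp
  next
    fix g y assume g: "g \<in> stab G N \<theta>" and y: "y \<in> stab G N \<theta>"
    show "mu G N \<theta> d P g (\<lambda>z. z) y \<in> Qab - {0}"
      unfolding s.mu_fa[OF g] using s.fa_Qab[OF g y] .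
  next
    fix g M' y assume g: "g \<in> stab G N \<theta>" and M: "M' \<in> carrier_mat d d" and MM: "P g * M' = 1\<^sub>m d \<and> M' * P g = 1\<^sub>m d"
      and y: "y \<in> stab G N \<theta>"
    have "conj_proj G P g (\<lambda>z. z) y = s.fa g y \<cdot>\<^sub>m (P g * (P y * M'))"
      using s.partA_eq[OF g M _ _ y] MM by blast
    also have "P g * (P y * M') = P g * P y * M'" using s.Pc[OF g] s.Pc[OF y] M by simp
    finally show "conj_proj G P g (\<lambda>z. z) y = mu G N \<theta> d P g (\<lambda>z. z) y \<cdot>\<^sub>m (P g * P y * M')"
      unfolding s.mu_fa[OF g] .
  qed
  have B: "\<forall>g \<sigma> t x. g \<in> carrier G \<and> \<sigma> \<in> HGal p \<and> fixes_char G N \<theta> g \<sigma> \<and>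
        t \<in> stab G N \<theta> \<and> x \<in> carrier G \<and> g = t \<otimes>\<^bsub>G\<^esub> x \<longrightarrow>
        fixes_char G N \<theta> x \<sigma> \<and>
        {inv\<^bsub>G\<^esub> x \<otimes>\<^bsub>G\<^esub> y \<otimes>\<^bsub>G\<^esub> x | y. y \<in> stab G N \<theta>} = stab G N \<theta> \<and>
        (\<forall>y\<in>stab G N \<theta>.
           mu G N \<theta> d P g \<sigma> y
             = \<sigma> (mu G N \<theta> d P t (\<lambda>z. z) (x \<otimes>\<^bsub>G\<^esub> y \<otimes>\<^bsub>G\<^esub> inv\<^bsub>G\<^esub> x)) * mu G N \<theta> d P x \<sigma> y)"
  proof (intro allI impI)
    fix g \<sigma> t x
    assume h: "g \<in> carrier G \<and> \<sigma> \<in> HGal p \<and> fixes_char G N \<theta> g \<sigma> \<and>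
        t \<in> stab G N \<theta> \<and> x \<in> carrier G \<and> g = t \<otimes>\<^bsub>G\<^esub> x"
    then have q: "qhom \<sigma>" using qhom_HGal by blast
    show "fixes_char G N \<theta> x \<sigma> \<and>
        {inv\<^bsub>G\<^esub> x \<otimes>\<^bsub>G\<^esub> y \<otimes>\<^bsub>G\<^esub> x | y. y \<in> stab G N \<theta>} = stab G N \<theta> \<and>
        (\<forall>y\<in>stab G N \<theta>.
           mu G N \<theta> d P g \<sigma> y
             = \<sigma> (mu G N \<theta> d P t (\<lambda>z. z) (x \<otimes>\<^bsub>G\<^esub> y \<otimes>\<^bsub>G\<^esub> inv\<^bsub>G\<^esub> x)) * mu G N \<theta> d P x \<sigma> y)"
      using s.partB[OF q] h by blast
  qed
  show ?thesis using A B by blast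
qed


end
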